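(* Let $v$ be a weight on $[0,1)$ satisfying $\lim_{r\to1^-}v(r)=0$ and let $t\in[0,1)$. Then $$\sigma_{pt}(C_t;H^\infty_v)=\sigma_{pt}(C_t;H^0_v)=\Big\{\tfrac{1}{m+1}: m\in\mathbb{N}_0\Big\}$$ and $$\sigma(C_t;H^\infty_v)=\sigma(C_t;H^0_v)=\Big\{\tfrac{1}{m+1}: m\in\mathbb{N}_0\Big\}\cup\{0\}.$$
   Context: $\mathbb{N}_0=\{0,1,2,\dots\}$, $\mathbb{D}=\{z\in\mathbb{C}:|z|<1\}$, and $H(\mathbb{D})$ is the space of holomorphic functions on $\mathbb{D}$. A weight is a continuous non-increasing function $v\colon[0,1)\to(0,\infty)$, extended to $\mathbb{D}$ by $v(z):=v(|z|)$. $H^\infty_v=\{f\in H(\mathbb{D}):\|f\|_{\infty,v}:=\sup_{z\in\mathbb{D}}|f(z)|v(z)<\infty\}$ and $H^0_v=\{f\in H(\mathbb{D}):\lim_{|z|\to1^-}|f(z)|v(z)=0\}$, both Banach spaces with the norm $\|\cdot\|_{\infty,v}$. For $t\in[0,1]$ the generalized Cesàro operator $C_t$ is defined on $f\in H(\mathbb{D})$ by $C_tf(0)=f(0)$ and $C_tf(z)=\frac{1}{z}\int_0^z\frac{f(\xi)}{1-t\xi}\,d\xi$ for $z\neq 0$. For a bounded operator $T$ on a Banach space $X$, $\sigma(T;X)$ is the set of $\lambda\in\mathbb{C}$ for which $\lambda I-T$ has no continuous inverse on $X$, and $\sigma_{pt}(T;X)$ is the set of $\lambda$ for which $\lambda I-T$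 is not injective. *)

theory Defs
  imports "HOL-Complex_Analysis.Complex_Analysis"
begin

abbreviation disc :: "complex set" where "disc \<equiv> ball 0 1"

definition is_weight :: "(real \<Rightarrow> real) \<Rightarrow> bool" where
  "is_weight v \<longleftrightarrow> continuous_on {0..<1} v
     \<and> (\<forall>r s. 0 \<le> r \<longrightarrow> r \<le> s \<longrightarrow> s < 1 \<longrightarrow> v s \<le> v r)
     \<and> (\<forall>r. 0 \<le> r \<longrightarrow> r < 1 \<longrightarrow> 0 < v r)"

definition wnorm :: "(real \<Rightarrow> real) \<Rightarrow> (complex \<Rightarrow> complex) \<Rightarrow> real" where
  "wnorm v f = (SUP z\<in>disc. cmod (f z) * v (cmod z))"

definition Hinf :: "(real \<Rightarrow> real) \<Rightarrow> (complex \<Rightarrow> complex) set" where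
  "Hinf v = {f. f holomorphic_on disc \<and> (\<exists>M. \<forall>z\<in>disc. cmod (f z) * v (cmod z) \<le> M)}"

definition H0 :: "(real \<Rightarrow> real) \<Rightarrow> (complex \<Rightarrow> complex) set" where
  "H0 v = {f. f holomorphic_on disc \<and>
      (\<forall>e>0. \<exists>r<1. \<forall>z. r < cmod z \<and> cmod z < 1 \<longrightarrow> cmod (f z) * v (cmod z) < e)}"

definition cesaro :: "real \<Rightarrow> (complex \<Rightarrow> complex) \<Rightarrow> (complex \<Rightarrow> complex)" where
  "cesaro t f z = (if z = 0 then f 0
     else contour_integral (linepath 0 z) (\<lambda>\<xi>. f \<xi> / (1 - of_real t * \<xi>)) / z)"

text \<open>Spectrum of an operator T on the function space X (elements identified when
  equal on the disc), normed by N: c is NOT in the spectrum iff c I - T has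
  a continuous (= bounded, since the inverse of a linear map is linear) inverse on X.\<close>
definition spec :: "((complex \<Rightarrow> complex) \<Rightarrow> (complex \<Rightarrow> complex)) \<Rightarrow> (complex \<Rightarrow> complex) set
    \<Rightarrow> ((complex \<Rightarrow> complex) \<Rightarrow> real) \<Rightarrow> complex set" where
  "spec T X N = {c. \<not> (\<exists>S. (\<forall>g\<in>X. S g \<in> X)
      \<and> (\<forall>f\<in>X. \<forall>z\<in>disc. S (\<lambda>w. c * f w - T f w) z = f z)
      \<and> (\<forall>g\<in>X. \<forall>z\<in>disc. c * S g z - T (S g) z = g z)
      \<and> (\<exists>C. \<forall>g\<in>X. N (S g) \<le> C * N g))}"

definition pspec :: "((complex \<Rightarrow> complex) \<Rightarrow> (complex \<Rightarrow> complex)) \<Rightarrow> (complex \<Rightarrow> complex) set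
    \<Rightarrow> complex set" where
  "pspec T X = {c. \<exists>f\<in>X. (\<exists>z\<in>disc. f z \<noteq> 0) \<and> (\<forall>z\<in>disc. c * f z - T f z = 0)}"

end

theory Submission
  imports Defs
begin

lemma denom_ge:
  fixes t s :: real and z :: complex
  assumes "0 \<le> t" "t < 1" "0 \<le> s" "s \<le> 1" "cmod z < 1"
  shows "1 - t \<le> cmod (1 - of_real t * (of_real s * z))"
proof -
  have "cmod (of_real t * (of_real s * z)) = t * s * cmod z"
    using assms by (simp add: norm_mult)
  also have "\<dots> \<le> t" using assms
    by (simp add: mult.assoc, intro mult_left_le) (auto intro: mult_le_one)
  finally have "cmod (of_real t * (of_real s * z)) \<le> t" .
  moreover have "1 - cmod (of_real t * (of_real s * z)) \<le> cmod (1 - of_real t * (of_real s * z))"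
    by (metis norm_one norm_triangle_ineq2)
  ultimately show ?thesis by linarith
qed

lemma denom_nz:
  fixes t s :: real and z :: complex
  assumes "0 \<le> t" "t < 1" "0 \<le> s" "s \<le> 1" "cmod z < 1"
  shows "1 - of_real t * (of_real s * z) \<noteq> 0"
  using denom_ge[OF assms] assms(2) by auto

lemma denom_nz1:
  fixes t :: real and z :: complex
  assumes "0 \<le> t" "t < 1" "cmod z < 1"
  shows "1 - of_real t * z \<noteq> 0"
  using denom_nz[OF assms(1,2) _ _ assms(3), of 1] by simp

lemma sz_disc: "z \<in> disc \<Longrightarrow> 0 \<le> s \<Longrightarrow> s \<le> (1::real) \<Longrightarrow> of_real s * z \<in> disc"
proof -
  assume a: "z \<in> disc" "0 \<le> s" "s \<le> 1"
  have "cmod (of_real s * z) = s * cmod z" using a by (simp add: norm_mult)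
  also have "\<dots> \<le> cmod z" using a by (simp add: mult_left_le_one_le)
  finally show ?thesis using a by simp
qed

lemma segment_disc: "z \<in> disc \<Longrightarrow> closed_segment 0 z \<subseteq> disc"
  by (simp add: closed_segment_subset convex_ball)

lemma cesaro_has_integral:
  assumes hol: "f holomorphic_on disc" and z: "z \<in> disc" and t: "0 \<le> t" "t < 1"
  shows "((\<lambda>s. f (of_real s * z) / (1 - of_real t * (of_real s * z))) has_integral cesaro t f z) {0..1}"
proof (cases "z = 0")
  case True
  have "((\<lambda>s::real. f 0) has_integral f 0) {0..1}"
    using has_integral_const_real[of "f 0" 0 1] by simp
  then show ?thesis using True by (simp add: cesaro_def)
next
  case False
  let ?g = "\<lambda>\<xi>. f \<xi> / (1 - of_real t * \<xi>)"
  have cont: "continuous_on (closed_segment 0 z) ?g"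
    by (intro continuous_intros continuous_on_subset[OF holomorphic_on_imp_continuous_on[OF hol] segment_disc[OF z]])
       (use segment_disc[OF z] denom_nz1[OF t] in auto)
  have "?g contour_integrable_on linepath 0 z"
    by (rule contour_integrable_continuous_linepath[OF cont])
  then have "(?g has_contour_integral contour_integral (linepath 0 z) ?g) (linepath 0 z)"
    by (rule has_contour_integral_integral)
  then have "((\<lambda>x. ?g (linepath 0 z x) * z) has_integral contour_integral (linepath 0 z) ?g) {0..1}"
    by (simp add: has_contour_integral_linepath)
  then have "((\<lambda>x. ?g (linepath 0 z x) * z / z) has_integral contour_integral (linepath 0 z) ?g / z) {0..1}"
    by (rule has_integral_divide)
  moreover have "linepath 0 z x = of_real x * z" for x
    by (simp add: linepath_def scaleR_conv_of_real)
  ultimately show ?thesis using False by (simp add: cesaro_def scaleR_conv_of_real mult.assoc mult.left_commute)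
qed

lemma cesaro_integral:
  assumes "f holomorphic_on disc" "z \<in> disc" "0 \<le> t" "t < 1"
  shows "cesaro t f z = integral {0..1} (\<lambda>s. f (of_real s * z) / (1 - of_real t * (of_real s * z)))"
  using cesaro_has_integral[OF assms] by (simp add: integral_unique)

lemma cont_param:
  assumes h: "h holomorphic_on disc" and t: "0 \<le> t" "t < 1" and z: "z \<in> disc"
    and that: "continuous_on {0..1} g"
  shows "continuous_on {0..1} (\<lambda>s::real. g s * h (of_real s * z) / (1 - of_real t * (of_real s * z)))"
proof -
  have "continuous_on {0..1} (\<lambda>s::real. h (of_real s * z))"
    by (rule continuous_on_compose2[OF holomorphic_on_imp_continuous_on[OF h]])
       (auto intro!: continuous_intros sz_disc[OF z])
  then show ?thesis
    by (intro continuous_intros that) (use denom_nz[OF t _ _ ] z in auto)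
qed

lemma param_holo:
  assumes h: "h holomorphic_on disc" and t: "0 \<le> t" "t < 1"
  shows "(\<lambda>z. integral {0..1} (\<lambda>s. of_real s ^ N * h (of_real s * z) / (1 - of_real t * (of_real s * z)))) holomorphic_on disc"
proof -
  define fx where "fx x s = (of_real s ^ N * (deriv h (of_real s * x) * of_real s) * (1 - of_real t * (of_real s * x)) - of_real s ^ N * h (of_real s * x) * (- (of_real t * of_real s))) / ((1 - of_real t * (of_real s * x)) * (1 - of_real t * (of_real s * x)))" for x :: complex and s :: real
  have "(\<lambda>x. integral (cbox 0 1) (\<lambda>s. of_real s ^ N * h (of_real s * x) / (1 - of_real t * (of_real s * x)))) holomorphic_on disc"
  proof (rule leibniz_rule_holomorphic[where fx=fx])
    fix x s assume x: "x \<in> disc" and s: "s \<in> cbox (0::real) 1"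
    then have s01: "0 \<le> s" "s \<le> 1" by auto
    have sx: "of_real s * x \<in> disc" using sz_disc[OF x s01] .
    have dh: "((\<lambda>x. h (of_real s * x)) has_field_derivative deriv h (of_real s * x) * of_real s) (at x)"
      by (rule DERIV_chain2[where g="\<lambda>x. of_real s * x", OF holomorphic_derivI[OF h open_ball sx, where T=UNIV]]) (auto intro!: derivative_eq_intros)
    have nz: "1 - of_real t * (of_real s * x) \<noteq> 0" using denom_nz[OF t s01] x by auto
    have "((\<lambda>x. of_real s ^ N * h (of_real s * x) / (1 - of_real t * (of_real s * x))) has_field_derivative fx x s) (at x)"
    proof -
      have d1: "((\<lambda>x. of_real s ^ N * h (of_real s * x)) has_field_derivative of_real s ^ N * (deriv h (of_real s * x) * of_real s)) (at x)"
        by (rule DERIV_cmult[OF dh])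
      have d2: "((\<lambda>x. 1 - of_real t * (of_real s * x)) has_field_derivative - (of_real t * of_real s)) (at x)"
        by (auto intro!: derivative_eq_intros)
      show ?thesis unfolding fx_def using DERIV_divide[OF d1 d2 nz] by simp
    qed
    then show "((\<lambda>x. of_real s ^ N * h (of_real s * x) / (1 - of_real t * (of_real s * x))) has_field_derivative fx x s) (at x within disc)"
      by (rule has_field_derivative_at_within)
  next
    fix x assume x: "x \<in> disc"
    show "(\<lambda>s. of_real s ^ N * h (of_real s * x) / (1 - of_real t * (of_real s * x))) integrable_on cbox 0 1"
    proof -
      have "continuous_on {0..1} (\<lambda>s::real. (of_real s :: complex) ^ N)" by (intro continuous_intros)
      from integrable_continuous_interval[OF cont_param[OF h t x this]] show ?thesis by simp
    qed
  next
    have c1: "continuous_on (disc \<times> {0..1}) (\<lambda>p::complex\<times>real. of_real (snd p) * fst p)"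
      by (intro continuous_intros)
    have im: "(\<lambda>p::complex\<times>real. of_real (snd p) * fst p) ` (disc \<times> {0..1}) \<subseteq> disc"
      using sz_disc by auto
    have ch: "continuous_on (disc \<times> {0..1}) (\<lambda>p::complex\<times>real. h (of_real (snd p) * fst p))"
      by (rule continuous_on_compose2[OF holomorphic_on_imp_continuous_on[OF h] c1 im])
    have cdh: "continuous_on (disc \<times> {0..1}) (\<lambda>p::complex\<times>real. deriv h (of_real (snd p) * fst p))"
      by (rule continuous_on_compose2[OF holomorphic_on_imp_continuous_on[OF holomorphic_deriv[OF h open_ball]] c1 im])
    have "continuous_on (disc \<times> {0..1}) (\<lambda>p::complex\<times>real. fx (fst p) (snd p))"
      unfolding fx_def
      by (intro continuous_intros ch cdh) (use denom_nz[OF t] in auto)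
    then show "continuous_on (disc \<times> cbox 0 1) (\<lambda>(x, s). fx x s)"
      by (simp add: split_beta')
  qed (rule convex_ball)
  then show ?thesis by simp
qed

lemma cesaro_holo:
  assumes h: "f holomorphic_on disc" and t: "0 \<le> t" "t < 1"
  shows "cesaro t f holomorphic_on disc"
  using holomorphic_transform[OF param_holo[OF h t, of 0]] cesaro_integral[OF h _ t] by simp

definition wb :: "(real \<Rightarrow> real) \<Rightarrow> (complex \<Rightarrow> complex) \<Rightarrow> real \<Rightarrow> bool" where
  "wb v f B \<longleftrightarrow> (\<forall>z\<in>disc. cmod (f z) * v (cmod z) \<le> B)"

definition zo :: "nat \<Rightarrow> (complex \<Rightarrow> complex) \<Rightarrow> bool" where
  "zo N f \<longleftrightarrow> (\<exists>h. h holomorphic_on disc \<and> (\<forall>w\<in>disc. f w = w ^ N * h w))"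

lemma weight_pos: "is_weight v \<Longrightarrow> 0 \<le> r \<Longrightarrow> r < 1 \<Longrightarrow> 0 < v r"
  by (simp add: is_weight_def)

lemma weight_mono: "is_weight v \<Longrightarrow> 0 \<le> r \<Longrightarrow> r \<le> s \<Longrightarrow> s < 1 \<Longrightarrow> v s \<le> v r"
  by (simp add: is_weight_def)

lemma weight_pos_disc: "is_weight v \<Longrightarrow> z \<in> disc \<Longrightarrow> 0 < v (cmod z)"
  by (simp add: is_weight_def)

lemma wb_nonneg: "is_weight v \<Longrightarrow> wb v f B \<Longrightarrow> 0 \<le> B"
  unfolding wb_def by (metis centre_in_ball mult_nonneg_nonneg norm_ge_zero order.trans weight_pos_disc less_imp_le zero_less_one)

lemma wbD: "wb v f B \<Longrightarrow> z \<in> disc \<Longrightarrow> cmod (f z) * v (cmod z) \<le> B"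
  by (simp add: wb_def)

lemma wb_mono: "wb v f B \<Longrightarrow> B \<le> B' \<Longrightarrow> wb v f B'"
  by (auto simp: wb_def intro: order_trans)

lemma h_bound:
  assumes w: "is_weight v" and h: "h holomorphic_on disc" and fh: "\<forall>w\<in>disc. f w = w ^ N * h w"
    and B: "wb v f B" and r: "0 < r" "r < 1" and z: "cmod z \<le> r"
  shows "cmod (h z) \<le> B / (r ^ N * v r)"
proof -
  have sub: "cball 0 r \<subseteq> disc" using r by auto
  have vr: "0 < v r" using weight_pos[OF w] r by auto
  show ?thesis
  proof (rule maximum_modulus_frontier[of h "cball 0 r"])
    have "ball 0 r \<subseteq> disc" using r by auto
    then show "h holomorphic_on interior (cball 0 r)"
      using holomorphic_on_subset[OF h] by auto
    show "continuous_on (closure (cball 0 r)) h"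
      using holomorphic_on_imp_continuous_on[OF holomorphic_on_subset[OF h sub]] by simp
    show "bounded (cball (0::complex) r)" by simp
    show "z \<in> cball 0 r" using z by simp
  next
    fix w assume "w \<in> frontier (cball (0::complex) r)"
    then have wr: "cmod w = r" using r by simp
    then have wd: "w \<in> disc" using r by simp
    have "cmod (f w) * v r \<le> B" using wbD[OF B wd] wr by simp
    moreover have "cmod (f w) = r ^ N * cmod (h w)" using fh wd wr by (simp add: norm_mult norm_power)
    ultimately have "cmod (h w) * (r ^ N * v r) \<le> B" by (simp add: algebra_simps)
    then show "cmod (h w) \<le> B / (r ^ N * v r)"
      using vr r by (simp add: field_simps)
  qed
qed

lemma f_sz_bound:
  assumes w: "is_weight v" and h: "h holomorphic_on disc" and fh: "\<forall>w\<in>disc. f w = w ^ N * h w"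
    and B: "wb v f B" and z: "z \<in> disc" and s: "0 \<le> s" "s \<le> 1"
  shows "cmod (f (of_real s * z)) * v (cmod z) \<le> s ^ N * B"
proof (cases "z = 0")
  case True
  have B0: "0 \<le> B" using wb_nonneg[OF w B] .
  show ?thesis
  proof (cases N)
    case 0 then show ?thesis using wbD[OF B z] True by simp
  next
    case (Suc n) then show ?thesis using fh True B0 s by simp
  qed
next
  case False
  let ?r = "cmod z"
  have r: "0 < ?r" "?r < 1" using False z by auto
  have sz: "of_real s * z \<in> disc" using sz_disc[OF z s] .
  have n: "cmod (of_real s * z) \<le> ?r" using s by (simp add: norm_mult mult_left_le_one_le)
  have hb: "cmod (h (of_real s * z)) \<le> B / (?r ^ N * v ?r)"
    by (rule h_bound[OF w h fh B r n])
  have vr: "0 < v ?r" using weight_pos[OF w] r by auto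
  have "cmod (f (of_real s * z)) = s ^ N * ?r ^ N * cmod (h (of_real s * z))"
    using fh sz s by (simp add: norm_mult norm_power power_mult_distrib)
  also have "\<dots> \<le> s ^ N * ?r ^ N * (B / (?r ^ N * v ?r))"
    using hb s by (intro mult_left_mono) auto
  also have "\<dots> = s ^ N * B / v ?r" using r vr by (simp add: field_simps)
  finally show ?thesis using vr by (simp add: field_simps)
qed

lemma pow_has_integral: "((\<lambda>s::real. s ^ N) has_integral (1 / real (Suc N))) {0..1}"
proof -
  have "((\<lambda>s::real. s ^ N) has_integral ((1::real) ^ Suc N / real (Suc N) - 0 ^ Suc N / real (Suc N))) {0..1}"
  proof (rule fundamental_theorem_of_calculus)
    fix x :: real
    have "((\<lambda>x. x ^ Suc N / real (Suc N)) has_real_derivative x ^ N) (at x)"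
      using DERIV_cdivide[OF DERIV_pow[of "Suc N" x], of "real (Suc N)"] by simp
    then show "((\<lambda>x. x ^ Suc N / real (Suc N)) has_vector_derivative x ^ N) (at x within {0..1})"
      by (simp add: has_real_derivative_iff_has_vector_derivative has_vector_derivative_at_within)
  qed simp
  then show ?thesis by simp
qed

lemma cesaro_bound:
  assumes w: "is_weight v" and t: "0 \<le> t" "t < 1" and hf: "f holomorphic_on disc"
    and h: "h holomorphic_on disc" and fh: "\<forall>w\<in>disc. f w = w ^ N * h w"
    and B: "wb v f B"
  shows "wb v (cesaro t f) (B / (real (Suc N) * (1 - t)))"
  unfolding wb_def
proof
  fix z assume z: "z \<in> disc"
  have vz: "0 < v (cmod z)" using weight_pos_disc[OF w z] .
  have B0: "0 \<le> B" using wb_nonneg[OF w B] .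
  let ?g = "\<lambda>s::real. f (of_real s * z) / (1 - of_real t * (of_real s * z))"
  let ?K = "B / (v (cmod z) * (1 - t))"
  have int1: "?g integrable_on {0..1}"
    using cesaro_has_integral[OF hf z t] by blast
  have int2: "((\<lambda>s. s ^ N * ?K) has_integral (1 / real (Suc N)) * ?K) {0..1}"
    by (rule has_integral_mult_left[OF pow_has_integral])
  have le: "norm (?g s) \<le> s ^ N * ?K" if s: "s \<in> {0..1}" for s
  proof -
    have s01: "0 \<le> s" "s \<le> 1" using s by auto
    have a: "cmod (f (of_real s * z)) \<le> s ^ N * B / v (cmod z)"
      using f_sz_bound[OF w h fh B z s01] vz by (simp add: field_simps)
    have b: "1 - t \<le> cmod (1 - of_real t * (of_real s * z))"
      using denom_ge[OF t s01] z by simp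
    have "norm (?g s) = cmod (f (of_real s * z)) / cmod (1 - of_real t * (of_real s * z))"
      by (simp add: norm_divide)
    also have "\<dots> \<le> (s ^ N * B / v (cmod z)) / (1 - t)"
      by (rule frac_le) (use a b t s01 B0 vz in auto)
    also have "\<dots> = s ^ N * ?K" by simp
    finally show ?thesis .
  qed
  have "cmod (cesaro t f z) \<le> (1 / real (Suc N)) * ?K"
    using integral_norm_bound_integral[OF int1 has_integral_integrable[OF int2] le]
      cesaro_integral[OF hf z t] integral_unique[OF int2] by (simp only:)
  then have "cmod (cesaro t f z) * v (cmod z) \<le> (1 / real (Suc N)) * ?K * v (cmod z)"
    using vz by (intro mult_right_mono) auto
  also have "\<dots> = B / (real (Suc N) * (1 - t))" using vz t by (simp add: divide_simps)
  finally show "cmod (cesaro t f z) * v (cmod z) \<le> B / (real (Suc N) * (1 - t))" .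
qed

lemma cesaro_zo:
  assumes t: "0 \<le> t" "t < 1" and hf: "f holomorphic_on disc"
    and h: "h holomorphic_on disc" and fh: "\<forall>w\<in>disc. f w = w ^ N * h w"
  shows "zo N (cesaro t f)"
  unfolding zo_def
proof (intro exI conjI ballI)
  show "(\<lambda>z. integral {0..1} (\<lambda>s. of_real s ^ N * h (of_real s * z) / (1 - of_real t * (of_real s * z)))) holomorphic_on disc"
    by (rule param_holo[OF h t])
  fix z assume z: "z \<in> disc"
  have "cesaro t f z = integral {0..1} (\<lambda>s. z ^ N * (of_real s ^ N * h (of_real s * z) / (1 - of_real t * (of_real s * z))))"
    unfolding cesaro_integral[OF hf z t]
  proof (rule integral_cong)
    fix s :: real assume "s \<in> {0..1}"
    then have "of_real s * z \<in> disc" using sz_disc[OF z] by auto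
    then show "f (of_real s * z) / (1 - of_real t * (of_real s * z)) = z ^ N * (of_real s ^ N * h (of_real s * z) / (1 - of_real t * (of_real s * z)))"
      using fh by (simp add: power_mult_distrib)
  qed
  then show "cesaro t f z = z ^ N * integral {0..1} (\<lambda>s. of_real s ^ N * h (of_real s * z) / (1 - of_real t * (of_real s * z)))"
    by (simp only: integral_mult_right)
qed

lemma cesaro_lin:
  assumes t: "0 \<le> t" "t < 1" and f: "f holomorphic_on disc" and g: "g holomorphic_on disc" and z: "z \<in> disc"
  shows "cesaro t (\<lambda>w. a * f w + b * g w) z = a * cesaro t f z + b * cesaro t g z"
proof -
  have hfg: "(\<lambda>w. a * f w + b * g w) holomorphic_on disc" by (intro holomorphic_intros f g)
  have "((\<lambda>s. a * (f (of_real s * z) / (1 - of_real t * (of_real s * z))) + b * (g (of_real s * z) / (1 - of_real t * (of_real s * z))))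
     has_integral (a * cesaro t f z + b * cesaro t g z)) {0..1}"
    by (intro has_integral_add has_integral_mult_right cesaro_has_integral f g z t)
  then have "((\<lambda>s. (a * f (of_real s * z) + b * g (of_real s * z)) / (1 - of_real t * (of_real s * z)))
     has_integral (a * cesaro t f z + b * cesaro t g z)) {0..1}"
    by (simp add: add_divide_distrib)
  then show ?thesis using cesaro_has_integral[OF hfg z t] has_integral_unique by blast
qed

lemma cesaro_sum:
  assumes t: "0 \<le> t" "t < 1" and f: "\<And>m. m \<in> A \<Longrightarrow> F m holomorphic_on disc" and z: "z \<in> disc"
    and A: "finite A"
  shows "cesaro t (\<lambda>w. \<Sum>m\<in>A. F m w) z = (\<Sum>m\<in>A. cesaro t (F m) z)"
proof -
  have hf: "(\<lambda>w. \<Sum>m\<in>A. F m w) holomorphic_on disc" by (intro holomorphic_intros f)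
  have "((\<lambda>s. \<Sum>m\<in>A. F m (of_real s * z) / (1 - of_real t * (of_real s * z))) has_integral (\<Sum>m\<in>A. cesaro t (F m) z)) {0..1}"
    by (intro has_integral_sum A cesaro_has_integral f z t)
  then have "((\<lambda>s. (\<Sum>m\<in>A. F m (of_real s * z)) / (1 - of_real t * (of_real s * z))) has_integral (\<Sum>m\<in>A. cesaro t (F m) z)) {0..1}"
    by (simp add: sum_divide_distrib)
  then show ?thesis using cesaro_has_integral[OF hf z t] has_integral_unique by blast
qed

lemma cesaro_cong:
  assumes t: "0 \<le> t" "t < 1" and f: "f holomorphic_on disc" and eq: "\<And>w. w \<in> disc \<Longrightarrow> f w = g w" and z: "z \<in> disc"
  shows "cesaro t f z = cesaro t g z"
proof -
  have g: "g holomorphic_on disc" using holomorphic_transform[OF f eq] .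
  have "integral {0..1} (\<lambda>s. f (of_real s * z) / (1 - of_real t * (of_real s * z))) = integral {0..1} (\<lambda>s. g (of_real s * z) / (1 - of_real t * (of_real s * z)))"
    by (rule integral_cong) (use eq sz_disc[OF z] in auto)
  then show ?thesis using cesaro_integral[OF f z t] cesaro_integral[OF g z t] by simp
qed

lemma cesaro_H0:
  assumes w: "is_weight v" and v0: "(v \<longlongrightarrow> 0) (at_left 1)" and t: "0 \<le> t" "t < 1"
    and f: "f holomorphic_on disc" and B: "wb v f B"
  shows "cesaro t f \<in> H0 v"
  unfolding H0_def
proof (intro CollectI conjI allI impI)
  show "cesaro t f holomorphic_on disc" by (rule cesaro_holo[OF f t])
  fix e :: real assume e: "0 < e"
  have B0: "0 \<le> B" using wb_nonneg[OF w B] .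
  define d where "d = min (1/2) (e * (1 - t) / (4 * (B + 1)))"
  have d: "0 < d" "d \<le> 1/2" "d * B / (1 - t) \<le> e / 4"
  proof -
    show "0 < d" using e t B0 by (simp add: d_def)
    show "d \<le> 1/2" unfolding d_def by (rule min.cobounded1)
    have "d \<le> e * (1 - t) / (4 * (B + 1))" by (simp add: d_def)
    then have "d * B \<le> e * (1 - t) / (4 * (B + 1)) * B" using B0 by (rule mult_right_mono)
    also have "\<dots> \<le> e * (1 - t) / 4"
      using e t B0 by (simp add: field_simps)
    finally show "d * B / (1 - t) \<le> e / 4" using t by (simp add: field_simps)
  qed
  define s0 where "s0 = 1 - d"
  have s0: "0 < s0" "s0 < 1" using d by (auto simp: s0_def)
  have vs0: "0 < v s0" using weight_pos[OF w] s0 by auto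
  define \<eta> where "\<eta> = e * (1 - t) * v s0 / (2 * (B + 1))"
  have eta: "0 < \<eta>" using e t vs0 B0 by (simp add: \<eta>_def)
  have "eventually (\<lambda>x. dist (v x) 0 < \<eta>) (at_left 1)"
    using v0 eta by (rule tendstoD)
  then obtain r where r: "r < 1" and rv: "\<And>y. r < y \<Longrightarrow> y < 1 \<Longrightarrow> \<bar>v y\<bar> < \<eta>"
    unfolding eventually_at_left_field by auto
  show "\<exists>r<1. \<forall>z. r < cmod z \<and> cmod z < 1 \<longrightarrow> cmod (cesaro t f z) * v (cmod z) < e"
  proof (intro exI[of _ r] conjI allI impI)
    show "r < 1" by fact
    fix z assume zr: "r < cmod z \<and> cmod z < 1"
    then have z: "z \<in> disc" by simp
    have vz: "0 < v (cmod z)" using weight_pos_disc[OF w z] .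
    have vzeta: "v (cmod z) < \<eta>" using rv[of "cmod z"] zr vz by auto
    let ?g = "\<lambda>s::real. f (of_real s * z) / (1 - of_real t * (of_real s * z))"
    have int: "?g integrable_on {0..1}" using cesaro_has_integral[OF f z t] by blast
    have int1: "?g integrable_on {0..s0}" by (rule integrable_subinterval_real[OF int]) (use s0 in auto)
    have int2: "?g integrable_on {s0..1}" by (rule integrable_subinterval_real[OF int]) (use s0 in auto)
    have split: "cesaro t f z = integral {0..s0} ?g + integral {s0..1} ?g"
      using Henstock_Kurzweil_Integration.integral_combine[where a=0 and c=s0 and b=1 and f="?g"] s0 int cesaro_integral[OF f z t] by simp
    have den: "1 - t \<le> cmod (1 - of_real t * (of_real s * z))" if "0 \<le> s" "s \<le> 1" for s
      using denom_ge[OF t that] z by simp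
    have b1: "norm (?g s) \<le> (B / v s0) / (1 - t)" if s: "s \<in> {0..s0}" for s
    proof -
      have s01: "0 \<le> s" "s \<le> 1" using s s0 by auto
      have sz: "of_real s * z \<in> disc" using sz_disc[OF z s01] .
      have ns: "cmod (of_real s * z) \<le> s0"
      proof -
        have "cmod (of_real s * z) = s * cmod z" using s01 by (simp add: norm_mult)
        also have "\<dots> \<le> s0 * 1" using s s01 zr by (intro mult_mono) auto
        finally show ?thesis by simp
      qed
      have "cmod (f (of_real s * z)) * v s0 \<le> cmod (f (of_real s * z)) * v (cmod (of_real s * z))"
        using weight_mono[OF w _ ns s0(2)] by (intro mult_left_mono) auto
      also have "\<dots> \<le> B" using wbD[OF B sz] .
      finally have fb: "cmod (f (of_real s * z)) \<le> B / v s0" using vs0 by (simp add: field_simps)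
      show ?thesis unfolding norm_divide
        by (rule frac_le[OF _ fb]) (use den[OF s01] t B0 vs0 in auto)
    qed
    have b2: "norm (?g s) \<le> (B / v (cmod z)) / (1 - t)" if s: "s \<in> {s0..1}" for s
    proof -
      have s01: "0 \<le> s" "s \<le> 1" using s s0 by auto
      have "cmod (f (of_real s * z)) * v (cmod z) \<le> s ^ 0 * B"
        by (rule f_sz_bound[OF w f _ B z s01, of 0]) simp
      then have fb: "cmod (f (of_real s * z)) \<le> B / v (cmod z)" using vz by (simp add: field_simps)
      show ?thesis unfolding norm_divide
        by (rule frac_le[OF _ fb]) (use den[OF s01] t B0 vz in auto)
    qed
    have i1: "norm (integral {0..s0} ?g) \<le> s0 * ((B / v s0) / (1 - t))"
      using integral_norm_bound_integral[OF int1 integrable_const_ivl b1] s0 by simp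
    have i2: "norm (integral {s0..1} ?g) \<le> (1 - s0) * ((B / v (cmod z)) / (1 - t))"
      using integral_norm_bound_integral[OF int2 integrable_const_ivl b2] s0 by simp
    have "cmod (cesaro t f z) * v (cmod z) \<le> (s0 * ((B / v s0) / (1 - t)) + (1 - s0) * ((B / v (cmod z)) / (1 - t))) * v (cmod z)"
      using split i1 i2 norm_triangle_ineq[of "integral {0..s0} ?g" "integral {s0..1} ?g"] vz
      by (intro mult_right_mono) auto
    also have "\<dots> = s0 * B * v (cmod z) / (v s0 * (1 - t)) + d * B / (1 - t)"
      using vz t by (simp add: field_simps s0_def)
    also have "\<dots> < e"
    proof -
      have "s0 * B * v (cmod z) \<le> 1 * B * \<eta>"
        using s0 B0 vzeta vz by (intro mult_mono) auto
      then have "s0 * B * v (cmod z) / (v s0 * (1 - t)) \<le> B * \<eta> / (v s0 * (1 - t))"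
        using vs0 t by (intro divide_right_mono) auto
      also have "\<dots> = e * (B / (B + 1)) / 2"
      proof -
        have B1: "B + 1 \<noteq> 0" using B0 by simp
        have eq1: "B * \<eta> = (e * (B / (B+1)) / 2) * (v s0 * (1-t))" using B1 unfolding \<eta>_def by (simp add: field_simps)
        show ?thesis using eq1 vs0 t by simp
      qed
      also have "\<dots> < e / 2 + e / 4"
      proof -
        have "B / (B + 1) < 1" using B0 by simp
        then have "e * (B / (B + 1)) < e * 1" using e by (rule mult_strict_left_mono)
        then have "e * (B / (B + 1)) / 2 < e * 1 / 2" by (rule divide_strict_right_mono) simp
        then show ?thesis using e by linarith
      qed
      finally have "s0 * B * v (cmod z) / (v s0 * (1 - t)) < e / 2 + e / 4" .
      then show ?thesis using d(3) by linarith
    qed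
    finally show "cmod (cesaro t f z) * v (cmod z) < e" .
  qed
qed

lemma disc_ne: "disc \<noteq> {}" by (metis centre_in_ball empty_iff zero_less_one)

lemma wnorm_le: "wb v f B \<Longrightarrow> wnorm v f \<le> B"
  unfolding wnorm_def wb_def by (rule cSUP_least[OF disc_ne]) auto

lemma wnorm_ge: "wb v f B \<Longrightarrow> z \<in> disc \<Longrightarrow> cmod (f z) * v (cmod z) \<le> wnorm v f"
  unfolding wnorm_def wb_def by (rule cSUP_upper) (auto intro!: bdd_aboveI2)

lemma wb_wnorm: "wb v f B \<Longrightarrow> wb v f (wnorm v f)"
  using wnorm_ge by (auto simp: wb_def)

lemma wnorm_cong: "(\<And>z. z \<in> disc \<Longrightarrow> f z = g z) \<Longrightarrow> wnorm v f = wnorm v g"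
  unfolding wnorm_def by (rule SUP_cong) auto

lemma wnorm_pos:
  assumes "is_weight v" "wb v f B" "z \<in> disc" "f z \<noteq> 0"
  shows "0 < wnorm v f"
proof -
  have "0 < cmod (f z) * v (cmod z)" using assms weight_pos_disc by auto
  also have "\<dots> \<le> wnorm v f" using wnorm_ge assms by blast
  finally show ?thesis .
qed

lemma wnorm_nonneg: "is_weight v \<Longrightarrow> wb v f B \<Longrightarrow> 0 \<le> wnorm v f"
  using wb_nonneg wb_wnorm by blast

lemma Hinf_iff: "f \<in> Hinf v \<longleftrightarrow> f holomorphic_on disc \<and> (\<exists>B. wb v f B)"
  by (simp add: Hinf_def wb_def)

lemma H0_holo: "f \<in> H0 v \<Longrightarrow> f holomorphic_on disc"
  by (simp add: H0_def)

lemma H0_wb: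
  assumes w: "is_weight v" and f: "f \<in> H0 v"
  shows "\<exists>B. wb v f B"
proof -
  from f have "\<exists>r<1. \<forall>z. r < cmod z \<and> cmod z < 1 \<longrightarrow> cmod (f z) * v (cmod z) < 1"
    unfolding H0_def by simp
  then obtain r where r: "r < 1" and rf: "\<And>z. r < cmod z \<Longrightarrow> cmod z < 1 \<Longrightarrow> cmod (f z) * v (cmod z) < 1"
    by blast
  define r0 where "r0 = max r 0"
  have r0: "0 \<le> r0" "r0 < 1" using r by (auto simp: r0_def)
  have sub: "cball 0 r0 \<subseteq> disc" using r0 by auto
  have "compact (f ` cball 0 r0)"
    by (rule compact_continuous_image[OF continuous_on_subset[OF holomorphic_on_imp_continuous_on[OF H0_holo[OF f]] sub]]) simp
  then have "bounded (f ` cball 0 r0)" by (rule compact_imp_bounded)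
  then obtain M where M0: "\<forall>x\<in>f ` cball 0 r0. norm x \<le> M" unfolding bounded_iff by blast
  have M: "\<And>z. z \<in> cball 0 r0 \<Longrightarrow> cmod (f z) \<le> M" using M0 by blast
  show ?thesis
  proof (intro exI[of _ "max 1 (\<bar>M\<bar> * v 0)"], unfold wb_def, intro ballI)
    fix z assume z: "z \<in> disc"
    show "cmod (f z) * v (cmod z) \<le> max 1 (\<bar>M\<bar> * v 0)"
    proof (cases "cmod z \<le> r0")
      case True
      have "cmod (f z) * v (cmod z) \<le> \<bar>M\<bar> * v 0"
        using M[of z] True weight_mono[OF w, of 0 "cmod z"] weight_pos_disc[OF w z] z
        by (intro mult_mono) auto
      then show ?thesis by simp
    next
      case False
      then show ?thesis using rf[of z] z r0_def by fastforce
    qed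
  qed
qed

lemma H0_Hinf: "is_weight v \<Longrightarrow> f \<in> H0 v \<Longrightarrow> f \<in> Hinf v"
  using H0_wb H0_holo Hinf_iff by blast

lemma wb_lin:
  assumes w: "is_weight v" and "wb v g1 B1" "wb v g2 B2" "\<And>z. z \<in> disc \<Longrightarrow> f z = a * g1 z + b * g2 z"
  shows "wb v f (cmod a * B1 + cmod b * B2)"
  unfolding wb_def
proof
  fix z assume z: "z \<in> disc"
  have vz: "0 < v (cmod z)" using weight_pos_disc[OF w z] .
  have "cmod (f z) * v (cmod z) \<le> (cmod a * cmod (g1 z) + cmod b * cmod (g2 z)) * v (cmod z)"
  proof (rule mult_right_mono)
    show "cmod (f z) \<le> cmod a * cmod (g1 z) + cmod b * cmod (g2 z)"
      using assms(4)[OF z] norm_triangle_ineq[of "a * g1 z" "b * g2 z"] by (simp add: norm_mult)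
  qed (use vz in auto)
  also have "\<dots> = cmod a * (cmod (g1 z) * v (cmod z)) + cmod b * (cmod (g2 z) * v (cmod z))"
    by (simp add: algebra_simps)
  also have "\<dots> \<le> cmod a * B1 + cmod b * B2"
    using assms(2,3) z by (intro add_mono mult_left_mono) (auto simp: wb_def)
  finally show "cmod (f z) * v (cmod z) \<le> cmod a * B1 + cmod b * B2" .
qed

lemma Hinf_lin:
  assumes w: "is_weight v" and "g1 \<in> Hinf v" "g2 \<in> Hinf v" "f holomorphic_on disc"
    "\<And>z. z \<in> disc \<Longrightarrow> f z = a * g1 z + b * g2 z"
  shows "f \<in> Hinf v"
  using assms wb_lin[OF w] unfolding Hinf_iff by blast

lemma H0_lin:
  assumes w: "is_weight v" and g1: "g1 \<in> H0 v" and g2: "g2 \<in> H0 v" and f: "f holomorphic_on disc"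
    and eq: "\<And>z. z \<in> disc \<Longrightarrow> f z = a * g1 z + b * g2 z"
  shows "f \<in> H0 v"
  unfolding H0_def
proof (intro CollectI conjI allI impI f)
  fix e :: real assume e: "0 < e"
  define e' where "e' = e / (cmod a + cmod b + 1)"
  have e': "0 < e'" using e by (simp add: e'_def add_nonneg_pos)
  obtain r1 where r1: "r1 < 1" "\<And>z. r1 < cmod z \<and> cmod z < 1 \<Longrightarrow> cmod (g1 z) * v (cmod z) < e'"
    using g1 e' unfolding H0_def by blast
  obtain r2 where r2: "r2 < 1" "\<And>z. r2 < cmod z \<and> cmod z < 1 \<Longrightarrow> cmod (g2 z) * v (cmod z) < e'"
    using g2 e' unfolding H0_def by blast
  show "\<exists>r<1. \<forall>z. r < cmod z \<and> cmod z < 1 \<longrightarrow> cmod (f z) * v (cmod z) < e"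
  proof (intro exI[of _ "max r1 r2"] conjI allI impI)
    show "max r1 r2 < 1" using r1 r2 by simp
    fix z assume zr: "max r1 r2 < cmod z \<and> cmod z < 1"
    then have z: "z \<in> disc" by simp
    have vz: "0 < v (cmod z)" using weight_pos_disc[OF w z] .
    have "cmod (f z) * v (cmod z) \<le> (cmod a * cmod (g1 z) + cmod b * cmod (g2 z)) * v (cmod z)"
    proof (rule mult_right_mono)
      show "cmod (f z) \<le> cmod a * cmod (g1 z) + cmod b * cmod (g2 z)"
        using eq[OF z] norm_triangle_ineq[of "a * g1 z" "b * g2 z"] by (simp add: norm_mult)
    qed (use vz in auto)
    also have "\<dots> = cmod a * (cmod (g1 z) * v (cmod z)) + cmod b * (cmod (g2 z) * v (cmod z))"
      by (simp add: algebra_simps)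
    also have "\<dots> \<le> cmod a * e' + cmod b * e'"
      using r1(2)[of z] r2(2)[of z] zr by (intro add_mono mult_left_mono) auto
    also have "\<dots> < e"
    proof -
      have "(cmod a + cmod b) * e' < (cmod a + cmod b + 1) * e'" using e' by simp
      also have "\<dots> = e"
      proof -
        have "0 < cmod a + cmod b + 1" by (simp add: add_nonneg_pos)
        then show ?thesis unfolding e'_def by simp
      qed
      finally show ?thesis by (simp add: algebra_simps)
    qed
    finally show "cmod (f z) * v (cmod z) < e" .
  qed
qed

definition eig :: "real \<Rightarrow> nat \<Rightarrow> complex \<Rightarrow> complex" where
  "eig t m z = z ^ m / (1 - of_real t * z) ^ Suc m"

lemma eig_holo: "0 \<le> t \<Longrightarrow> t < 1 \<Longrightarrow> eig t m holomorphic_on disc"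
  unfolding eig_def by (intro holomorphic_intros) (use denom_nz1[of t] in force)

lemma eig_wb:
  assumes w: "is_weight v" and t: "0 \<le> t" "t < 1"
  shows "wb v (eig t m) (v 0 / (1 - t) ^ Suc m)"
  unfolding wb_def
proof
  fix z assume z: "z \<in> disc"
  have d: "1 - t \<le> cmod (1 - of_real t * z)" using denom_ge[OF t _ _ , of 1 z] z by simp
  have "cmod (eig t m z) = cmod z ^ m / cmod (1 - of_real t * z) ^ Suc m"
    unfolding eig_def norm_divide norm_power ..
  also have "\<dots> \<le> 1 / (1 - t) ^ Suc m"
  proof (rule frac_le)
    show "(1 - t) ^ Suc m \<le> cmod (1 - of_real t * z) ^ Suc m"
      by (rule power_mono[OF d]) (use t in simp)
  qed (use z t in \<open>auto intro: power_le_one\<close>)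
  finally have a: "cmod (eig t m z) \<le> 1 / (1 - t) ^ Suc m" .
  have "cmod (eig t m z) * v (cmod z) \<le> (1 / (1 - t) ^ Suc m) * v 0"
    using a weight_mono[OF w, of 0 "cmod z"] weight_pos_disc[OF w z] z t by (intro mult_mono) auto
  then show "cmod (eig t m z) * v (cmod z) \<le> v 0 / (1 - t) ^ Suc m" by simp
qed

lemma eig_Hinf: "is_weight v \<Longrightarrow> 0 \<le> t \<Longrightarrow> t < 1 \<Longrightarrow> eig t m \<in> Hinf v"
  unfolding Hinf_iff using eig_holo[of t m] eig_wb[of v t m] by blast

lemma eig_nz: assumes "0 \<le> t" "t < 1" shows "eig t m (1/2::complex) \<noteq> 0"
proof -
  have "1 - of_real t * (1/2::complex) \<noteq> 0" using denom_nz1[of t "1/2"] assms by simp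
  then show "eig t m (1/2::complex) \<noteq> 0" unfolding eig_def by simp
qed

lemma eig_cesaro:
  assumes t: "0 \<le> t" "t < 1" and z: "z \<in> disc"
  shows "cesaro t (eig t m) z = eig t m z / of_nat (Suc m)"
proof (cases "z = 0")
  case True
  have c0: "cesaro t (eig t m) z = eig t m 0" using True by (simp add: cesaro_def)
  show ?thesis
  proof (cases m)
    case 0 then show ?thesis using c0 True by (simp add: eig_def)
  next
    case (Suc k) then show ?thesis using c0 True by (simp add: eig_def)
  qed
next
  case False
  define F where "F w = w ^ Suc m / (of_nat (Suc m) * (1 - of_real t * w) ^ Suc m)" for w :: complex
  have dF: "(F has_field_derivative (eig t m w / (1 - of_real t * w))) (at w within disc)" if w: "w \<in> disc" for w
  proof -
    have nz: "1 - of_real t * w \<noteq> 0" using denom_nz1[OF t] w by simp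
    let ?a = "1 - of_real t * w" and ?n = "of_nat (Suc m) :: complex"
    have d1: "((\<lambda>w. w ^ Suc m) has_field_derivative ?n * (1 * w ^ m)) (at w)"
      using DERIV_power[OF DERIV_ident, where n="Suc m" and x=w and s=UNIV] by simp
    have d2: "((\<lambda>w. 1 - of_real t * w) has_field_derivative - of_real t) (at w)"
      by (auto intro!: derivative_eq_intros)
    have d3: "((\<lambda>w. (1 - of_real t * w) ^ Suc m) has_field_derivative ?n * (- of_real t * ?a ^ m)) (at w)"
      using DERIV_power[OF d2, of "Suc m"] by simp
    have d4: "((\<lambda>w. ?n * (1 - of_real t * w) ^ Suc m) has_field_derivative ?n * (?n * (- of_real t * ?a ^ m))) (at w)"
      by (rule DERIV_cmult[OF d3])
    have nz': "?n * ?a ^ Suc m \<noteq> 0" using nz by (simp only: mult_eq_0_iff power_eq_0_iff of_nat_eq_0_iff) simp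
    have D: "(F has_field_derivative (?n * (1 * w ^ m) * (?n * ?a ^ Suc m) - w ^ Suc m * (?n * (?n * (- of_real t * ?a ^ m)))) / ((?n * ?a ^ Suc m) * (?n * ?a ^ Suc m))) (at w)"
      unfolding F_def by (rule DERIV_divide[OF d1 d4 nz'])
    moreover have "(?n * (1 * w ^ m) * (?n * ?a ^ Suc m) - w ^ Suc m * (?n * (?n * (- of_real t * ?a ^ m)))) / ((?n * ?a ^ Suc m) * (?n * ?a ^ Suc m))
        = eig t m w / (1 - of_real t * w)"
    proof -
      have n0: "?n \<noteq> 0" by (simp only: of_nat_eq_0_iff)
      have "?n * (1 * w ^ m) * (?n * ?a ^ Suc m) - w ^ Suc m * (?n * (?n * (- of_real t * ?a ^ m)))
          = ?n * ?n * w ^ m * ?a ^ m * (?a + of_real t * w)"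
        by (simp add: algebra_simps)
      also have "\<dots> = ?n * ?n * w ^ m * ?a ^ m" by simp
      finally have num: "?n * (1 * w ^ m) * (?n * ?a ^ Suc m) - w ^ Suc m * (?n * (?n * (- of_real t * ?a ^ m)))
          = ?n * ?n * w ^ m * ?a ^ m" .
      have n1: "(1::complex) + of_nat m \<noteq> 0"
        by (metis add.commute of_nat_Suc of_nat_eq_0_iff nat.distinct(1))
      have e1: "(?n * ?a ^ Suc m) * (?n * ?a ^ Suc m) = (?n * ?n * ?a ^ m) * (?a ^ m * ?a * ?a)"
        by (simp only: power_Suc mult_ac)
      have e2: "?n * ?n * w ^ m * ?a ^ m = (?n * ?n * ?a ^ m) * w ^ m" by (simp only: mult_ac)
      have c: "?n * ?n * ?a ^ m \<noteq> 0" using n0 nz by (simp only: mult_eq_0_iff power_eq_0_iff) simp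
      have "?n * ?n * w ^ m * ?a ^ m / ((?n * ?a ^ Suc m) * (?n * ?a ^ Suc m)) = w ^ m / (?a ^ m * ?a * ?a)"
        unfolding e1 e2 by (rule nonzero_mult_divide_mult_cancel_left[OF c])
      also have "\<dots> = eig t m w / ?a" unfolding eig_def by (simp only: divide_divide_eq_left power_Suc mult_ac)
      finally show ?thesis unfolding num .
    qed
    ultimately show ?thesis by (simp add: has_field_derivative_at_within)
  qed
  have "((\<lambda>w. eig t m w / (1 - of_real t * w)) has_contour_integral (F (pathfinish (linepath 0 z)) - F (pathstart (linepath 0 z)))) (linepath 0 z)"
    by (rule contour_integral_primitive[OF dF]) (use segment_disc[OF z] in auto)
  then have "contour_integral (linepath 0 z) (\<lambda>w. eig t m w / (1 - of_real t * w)) = F z"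
    using contour_integral_unique by (simp add: F_def)
  then have "cesaro t (eig t m) z = F z / z" using False by (simp add: cesaro_def)
  also have "\<dots> = z ^ m / (of_nat (Suc m) * (1 - of_real t * z) ^ Suc m)"
  proof -
    have "F z = z * (z ^ m / (of_nat (Suc m) * (1 - of_real t * z) ^ Suc m))"
      unfolding F_def power_Suc[of z m] by simp
    then show ?thesis using False by simp
  qed
  also have "\<dots> = eig t m z / of_nat (Suc m)"
    unfolding eig_def divide_divide_eq_left by (rule arg_cong[where f="\<lambda>x. z ^ m / x"], rule mult.commute)
  finally show ?thesis .
qed

lemma prim_exists:
  assumes t: "0 \<le> t" "t < 1" and f: "f holomorphic_on disc"
  obtains F where "\<And>x. x \<in> disc \<Longrightarrow> (F has_field_derivative f x / (1 - of_real t * x)) (at x)"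
proof -
  have "(\<lambda>x. f x / (1 - of_real t * x)) holomorphic_on disc"
    by (intro holomorphic_intros f) (use denom_nz1[OF t] in auto)
  then obtain F where "\<And>x. x \<in> disc \<Longrightarrow> (F has_field_derivative f x / (1 - of_real t * x)) (at x within disc)"
    using holomorphic_convex_primitive'[OF convex_ball open_ball] by blast
  then show ?thesis using that at_within_open[OF _ open_ball] by metis
qed

lemma cesaro_prim:
  assumes t: "0 \<le> t" "t < 1"
    and dF: "\<And>x. x \<in> disc \<Longrightarrow> (F has_field_derivative f x / (1 - of_real t * x)) (at x)"
    and z: "z \<in> disc"
  shows "z * cesaro t f z = F z - F 0"
proof (cases "z = 0")
  case True then show ?thesis by simp
next
  case False
  have pim: "path_image (linepath 0 z) \<subseteq> disc" unfolding path_image_linepath by (rule segment_disc[OF z])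
  have d': "\<And>x. x \<in> disc \<Longrightarrow> (F has_field_derivative f x / (1 - of_real t * x)) (at x within disc)"
    using dF has_field_derivative_at_within by blast
  have "((\<lambda>x. f x / (1 - of_real t * x)) has_contour_integral (F (pathfinish (linepath 0 z)) - F (pathstart (linepath 0 z)))) (linepath 0 z)"
    by (rule contour_integral_primitive[OF d' valid_path_linepath pim])
  then have "contour_integral (linepath 0 z) (\<lambda>x. f x / (1 - of_real t * x)) = F z - F 0"
    using contour_integral_unique by simp
  then show ?thesis using False by (simp add: cesaro_def)
qed

lemma local_factor:
  assumes f: "f holomorphic_on disc" and z0: "z0 \<in> disc" "f z0 \<noteq> 0"
  obtains m g r where "0 < r" "ball 0 r \<subseteq> disc" "g holomorphic_on ball 0 r" "g 0 \<noteq> 0"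
    "\<And>w. w \<in> ball 0 r \<Longrightarrow> f w = w ^ m * g w"
proof (cases "f 0 = 0")
  case False
  show ?thesis by (rule that[where m=0 and g=f and r=1]) (use False f in \<open>auto simp: holomorphic_on_subset\<close>)
next
  case True
  have nc: "\<not> f constant_on disc"
  proof
    assume "f constant_on disc"
    then obtain c where "\<And>x. x \<in> disc \<Longrightarrow> f x = c" unfolding constant_on_def by blast
    then have "f z0 = c" "f 0 = c" using z0 by auto
    then show False using z0(2) True by simp
  qed
  have z0d: "(0::complex) \<in> disc" by simp
  obtain n r g where A: "0 < n" "0 < r" "ball 0 r \<subseteq> disc" "g holomorphic_on ball 0 r"
    and B: "\<And>w. w \<in> ball 0 r \<Longrightarrow> f w = (w - 0) ^ n * g w" and C: "\<And>w. w \<in> ball 0 r \<Longrightarrow> g w \<noteq> 0"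
    by (rule holomorphic_factor_zero_nonconstant[OF f open_ball connected_ball z0d True nc]) blast
  show ?thesis
  proof (rule that[where m=n and g=g and r=r])
    show "g 0 \<noteq> 0" using C A(2) by simp
    show "f w = w ^ n * g w" if "w \<in> ball 0 r" for w using B[OF that] by simp
  qed (use A in auto)
qed

lemma eigen_char:
  assumes t: "0 \<le> t" "t < 1" and f: "f holomorphic_on disc" and z0: "z0 \<in> disc" "f z0 \<noteq> 0"
    and eq: "\<And>z. z \<in> disc \<Longrightarrow> c * f z - cesaro t f z = 0"
  shows "\<exists>m. c = 1 / of_nat (Suc m)"
proof -
  obtain F where dF: "\<And>x. x \<in> disc \<Longrightarrow> (F has_field_derivative f x / (1 - of_real t * x)) (at x)"
    using prim_exists[OF t f] by blast
  have FF: "F z = F 0 + c * z * f z" if "z \<in> disc" for z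
  proof -
    have a: "c * f z = cesaro t f z" using eq[OF that] by (simp only: right_minus_eq)
    have b: "z * cesaro t f z = F z - F 0" by (rule cesaro_prim[OF t dF that])
    have "F z = F 0 + z * cesaro t f z" using b by (simp add: algebra_simps)
    also have "\<dots> = F 0 + z * (c * f z)" using a by simp
    finally show ?thesis by (simp add: mult_ac)
  qed
  obtain m g r where r: "0 < r" "ball 0 r \<subseteq> disc" and g: "g holomorphic_on ball 0 r" "g 0 \<noteq> 0"
    and fg: "\<And>w. w \<in> ball 0 r \<Longrightarrow> f w = w ^ m * g w"
    by (rule local_factor[OF f z0]) blast
  let ?P = "\<lambda>w. c * (of_nat (Suc m) * g w + w * deriv g w) - g w / (1 - of_real t * w)"
  have P0: "?P w = 0" if w: "w \<in> ball 0 r" "w \<noteq> 0" for w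
  proof -
    have wd: "w \<in> disc" using w r by auto
    have nz: "1 - of_real t * w \<noteq> 0" using denom_nz1[OF t] wd by simp
    have dg: "(g has_field_derivative deriv g w) (at w)"
      using holomorphic_derivI[OF g(1) open_ball w(1)] by simp
    have d1: "((\<lambda>w. w ^ Suc m) has_field_derivative of_nat (Suc m) * (1 * w ^ m)) (at w)"
      using DERIV_power[OF DERIV_ident, where n="Suc m" and x=w and s=UNIV] by simp
    have dG0: "((\<lambda>w. F 0 + c * (w ^ Suc m * g w)) has_field_derivative
        0 + c * (of_nat (Suc m) * (1 * w ^ m) * g w + deriv g w * w ^ Suc m)) (at w)"
      by (rule DERIV_add[OF DERIV_const DERIV_cmult[OF DERIV_mult[OF d1 dg]]])
    have eqD: "0 + c * (of_nat (Suc m) * (1 * w ^ m) * g w + deriv g w * w ^ Suc m) = c * (of_nat (Suc m) * w ^ m * g w + w ^ Suc m * deriv g w)"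
      by (simp only: add_0_left mult_1_left mult.commute[of "deriv g w"])
    from dG0 have dG: "((\<lambda>w. F 0 + c * (w ^ Suc m * g w)) has_field_derivative
        c * (of_nat (Suc m) * w ^ m * g w + w ^ Suc m * deriv g w)) (at w)" by (simp only: eqD)
    have "((\<lambda>w. F 0 + c * (w ^ Suc m * g w)) has_field_derivative f w / (1 - of_real t * w)) (at w)"
    proof (rule has_field_derivative_transform_within_open[OF dF[OF wd] open_ball w(1)])
      fix x :: complex assume x: "x \<in> ball 0 r"
      then have xd: "x \<in> disc" using r by auto
      have "F x = F 0 + c * x * f x" by (rule FF[OF xd])
      also have "\<dots> = F 0 + c * (x ^ Suc m * g x)" using fg[OF x] by (simp add: algebra_simps)
      finally show "F x = F 0 + c * (x ^ Suc m * g x)" .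
    qed
    then have "c * (of_nat (Suc m) * w ^ m * g w + w ^ Suc m * deriv g w) = f w / (1 - of_real t * w)"
      using DERIV_unique[OF dG] by blast
    then have "w ^ m * (c * (of_nat (Suc m) * g w + w * deriv g w)) = w ^ m * (g w / (1 - of_real t * w))"
      using fg[OF w(1)] by (simp add: algebra_simps)
    moreover have wm: "w ^ m \<noteq> 0" using w(2) by simp
    ultimately have "c * (of_nat (Suc m) * g w + w * deriv g w) = g w / (1 - of_real t * w)"
      using mult_left_cancel[OF wm] by blast
    then show ?thesis by simp
  qed
  have contP: "continuous_on (ball 0 r) ?P"
    by (intro continuous_intros holomorphic_on_imp_continuous_on[OF g(1)]
        holomorphic_on_imp_continuous_on[OF holomorphic_deriv[OF g(1) open_ball]])
       (use denom_nz1[OF t] r in auto)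
  have "isCont ?P 0" using contP r(1) continuous_on_eq_continuous_at[OF open_ball, of 0 r ?P] by auto
  then have l1: "(?P \<longlongrightarrow> ?P 0) (at 0)" by (simp add: isCont_def)
  have ev: "eventually (\<lambda>w. ?P w = 0) (at 0)"
    unfolding eventually_at using r(1) P0 by (intro exI[of _ r]) (auto simp: dist_norm)
  have l2: "(?P \<longlongrightarrow> 0) (at 0)" by (rule tendsto_eventually[OF ev])
  have "?P 0 = 0" using tendsto_unique[OF _ l1 l2] by simp
  then have "c * of_nat (Suc m) * g 0 = 1 * g 0" by (simp add: algebra_simps)
  then have "c * of_nat (Suc m) = 1" using g(2) by (simp only: mult_cancel_right) simp
  then have "c = 1 / of_nat (Suc m)" by (simp add: field_simps del: of_nat_Suc)
  then show ?thesis by blast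
qed

lemma geo_sum:
  fixes x K :: real
  assumes "0 \<le> x" "x < 1"
  shows "summable (\<lambda>k. K * x ^ k)" "(\<Sum>k. K * x ^ k) = K / (1 - x)"
proof -
  have s: "summable (\<lambda>k. x ^ k)" using assms by (intro summable_geometric) simp
  then show "summable (\<lambda>k. K * x ^ k)" by (rule summable_mult)
  show "(\<Sum>k. K * x ^ k) = K / (1 - x)"
    using suminf_mult[OF s, of K] suminf_geometric[of x] assms by simp
qed

lemma iter_props:
  assumes w: "is_weight v" and t: "0 \<le> t" "t < 1" and r: "r holomorphic_on disc"
    and zr: "zo N r" and B: "wb v r B"
  shows "(cesaro t ^^ k) r holomorphic_on disc \<and> zo N ((cesaro t ^^ k) r)
     \<and> wb v ((cesaro t ^^ k) r) ((1 / (real (Suc N) * (1 - t))) ^ k * B)"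
proof (induction k)
  case 0 then show ?case using r zr B by simp
next
  case (Suc k)
  let ?p = "(cesaro t ^^ k) r"
  have hp: "?p holomorphic_on disc" and zp: "zo N ?p" and bp: "wb v ?p ((1 / (real (Suc N) * (1 - t))) ^ k * B)"
    using Suc by auto
  obtain h where h: "h holomorphic_on disc" "\<forall>w\<in>disc. ?p w = w ^ N * h w" using zp unfolding zo_def by blast
  have "cesaro t ?p holomorphic_on disc" by (rule cesaro_holo[OF hp t])
  moreover have "zo N (cesaro t ?p)" by (rule cesaro_zo[OF t hp h])
  moreover have "wb v (cesaro t ?p) ((1 / (real (Suc N) * (1 - t))) ^ k * B / (real (Suc N) * (1 - t)))"
    by (rule cesaro_bound[OF w t hp h bp])
  ultimately show ?case by (simp add: field_simps)
qed

lemma neumann: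
  assumes w: "is_weight v" and t: "0 \<le> t" "t < 1" and r: "r holomorphic_on disc"
    and zr: "zo N r" and B: "wb v r B"
    and c: "1 / (real (Suc N) * (1 - t)) < cmod c"
  shows "\<exists>u. u holomorphic_on disc \<and> wb v u (B / (cmod c - 1 / (real (Suc N) * (1 - t))))
     \<and> (\<forall>z\<in>disc. c * u z - cesaro t u z = r z)"
proof -
  define q where "q = 1 / (real (Suc N) * (1 - t))"
  define p where "p k = (cesaro t ^^ k) r" for k
  have q0: "0 < q" using t by (simp add: q_def)
  have c0: "0 < cmod c" using q0 c q_def by linarith
  have cnz: "c \<noteq> 0" using c0 by auto
  define x where "x = q / cmod c"
  have x: "0 \<le> x" "x < 1" using q0 c0 c by (auto simp: x_def q_def field_simps)
  have B0: "0 \<le> B" using wb_nonneg[OF w B] .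
  have P: "p k holomorphic_on disc" "zo N (p k)" "wb v (p k) (q ^ k * B)" for k
    using iter_props[OF w t r zr B, of k] by (auto simp: p_def q_def)
  have pb: "cmod (p k z / c ^ Suc k) \<le> (B / (v \<rho> * cmod c)) * x ^ k"
    if z: "z \<in> disc" "cmod z \<le> \<rho>" "\<rho> < 1" for k z \<rho>
  proof -
    have vz: "0 < v (cmod z)" using weight_pos_disc[OF w z(1)] .
    have vr: "v \<rho> \<le> v (cmod z)" using weight_mono[OF w _ z(2) z(3)] by simp
    have vr0: "0 < v \<rho>" using weight_pos[OF w _ z(3)] z(2) norm_ge_zero order_trans by blast
    have "cmod (p k z) * v (cmod z) \<le> q ^ k * B" using wbD[OF P(3) z(1)] .
    then have "cmod (p k z) * v \<rho> \<le> q ^ k * B"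
      using vr by (meson mult_left_mono norm_ge_zero order_trans)
    then have a: "cmod (p k z) \<le> q ^ k * B / v \<rho>" using vr0 by (simp add: field_simps)
    have "cmod (p k z / c ^ Suc k) = cmod (p k z) / cmod c ^ Suc k" by (simp only: norm_divide norm_power)
    also have "\<dots> \<le> (q ^ k * B / v \<rho>) / cmod c ^ Suc k"
      using a c0 by (intro divide_right_mono) auto
    also have "\<dots> = (B / (v \<rho> * cmod c)) * x ^ k"
      using c0 vr0 by (simp add: x_def power_divide field_simps)
    finally show ?thesis .
  qed
  define u where "u z = (\<Sum>k. p k z / c ^ Suc k)" for z
  have summ: "summable (\<lambda>k. p k z / c ^ Suc k)" if z: "z \<in> disc" for z
  proof (rule summable_comparison_test'[OF geo_sum(1)[OF x, of "B / (v (cmod z) * cmod c)"]])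
    show "norm (p k z / c ^ Suc k) \<le> B / (v (cmod z) * cmod c) * x ^ k" for k
      using pb[of z "cmod z" k] z by simp
  qed
  have ulim: "uniform_limit (cball 0 \<rho>) (\<lambda>n z. \<Sum>k<n. p k z / c ^ Suc k) u sequentially"
    if \<rho>: "0 \<le> \<rho>" "\<rho> < 1" for \<rho>
    unfolding u_def
  proof (rule Weierstrass_m_test)
    show "summable (\<lambda>k. B / (v \<rho> * cmod c) * x ^ k)" by (rule geo_sum(1)[OF x])
    fix k z assume "z \<in> cball (0::complex) \<rho>"
    then show "norm (p k z / c ^ Suc k) \<le> B / (v \<rho> * cmod c) * x ^ k"
      using pb[of z \<rho> k] \<rho> by simp
  qed
  have uhol: "u holomorphic_on disc"
  proof (rule holomorphic_uniform_sequence[OF open_ball])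
    show "(\<lambda>z. \<Sum>k<n. p k z / c ^ Suc k) holomorphic_on disc" for n
      by (intro holomorphic_intros P(1)) (use cnz in simp)
  next
    fix z :: complex assume z: "z \<in> disc"
    define d where "d = (1 - cmod z) / 2"
    have d: "0 < d" using z by (simp add: d_def)
    have sub: "cball z d \<subseteq> cball 0 ((1 + cmod z) / 2)"
    proof
      fix y :: complex assume "y \<in> cball z d"
      then have "cmod (y - z) \<le> d" by (simp add: dist_norm norm_minus_commute)
      then have "cmod y \<le> cmod z + d" using norm_triangle_ineq2[of y z] by linarith
      then have "cmod y \<le> (1 + cmod z) / 2" unfolding d_def by (simp add: field_simps)
      then show "y \<in> cball 0 ((1 + cmod z) / 2)" by simp
    qed
    have sub2: "cball (0::complex) ((1 + cmod z) / 2) \<subseteq> disc" using z by auto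
    show "\<exists>d>0. cball z d \<subseteq> disc \<and> uniform_limit (cball z d) (\<lambda>n z. \<Sum>k<n. p k z / c ^ Suc k) u sequentially"
      using d sub sub2 uniform_limit_on_subset[OF ulim sub] z by (intro exI[of _ d]) auto
  qed
  have ubound: "wb v u (B / (cmod c - q))"
    unfolding wb_def
  proof
    fix z assume z: "z \<in> disc"
    have vz: "0 < v (cmod z)" using weight_pos_disc[OF w z] .
    have "cmod (u z) \<le> (\<Sum>k. B / (v (cmod z) * cmod c) * x ^ k)"
      unfolding u_def by (rule norm_suminf_le[OF _ geo_sum(1)[OF x]]) (use pb[of z "cmod z"] z in auto)
    also have "\<dots> = B / (v (cmod z) * cmod c) / (1 - x)" by (rule geo_sum(2)[OF x])
    also have "\<dots> = B / (v (cmod z) * (cmod c - q))"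
    proof -
      have "v (cmod z) * cmod c * (1 - x) = v (cmod z) * (cmod c - q)"
        using c0 unfolding x_def by (simp add: field_simps)
      then show ?thesis by (simp add: divide_divide_eq_left)
    qed
    finally have a: "cmod (u z) \<le> B / (v (cmod z) * (cmod c - q))" .
    have "cmod (u z) * v (cmod z) \<le> B / (v (cmod z) * (cmod c - q)) * v (cmod z)"
      by (rule mult_right_mono[OF a]) (use vz in simp)
    also have "\<dots> = B / (cmod c - q)" using vz by simp
    finally show "cmod (u z) * v (cmod z) \<le> B / (cmod c - q)" .
  qed
  have ueq: "c * u z - cesaro t u z = r z" if z: "z \<in> disc" for z
  proof -
    let ?D = "\<lambda>s::real. 1 - of_real t * (of_real s * z)"
    have ul: "uniform_limit {0..1} (\<lambda>n s. \<Sum>k<n. p k (of_real s * z) / c ^ Suc k / ?D s)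
        (\<lambda>s. \<Sum>k. p k (of_real s * z) / c ^ Suc k / ?D s) sequentially"
    proof (rule Weierstrass_m_test)
      show "summable (\<lambda>k. B / (v (cmod z) * cmod c) * x ^ k / (1 - t))"
        using geo_sum(1)[OF x] by (rule summable_divide)
      fix k and s :: real assume s: "s \<in> {0..1}"
      then have s01: "0 \<le> s" "s \<le> 1" by auto
      have sz: "of_real s * z \<in> disc" using sz_disc[OF z s01] .
      have nsz: "cmod (of_real s * z) \<le> cmod z" using s01 by (simp add: norm_mult mult_left_le_one_le)
      have "cmod (p k (of_real s * z) / c ^ Suc k / ?D s) = cmod (p k (of_real s * z) / c ^ Suc k) / cmod (?D s)"
        by (simp only: norm_divide)
      also have "\<dots> \<le> (B / (v (cmod z) * cmod c) * x ^ k) / (1 - t)"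
      proof (rule frac_le)
        show "cmod (p k (of_real s * z) / c ^ Suc k) \<le> B / (v (cmod z) * cmod c) * x ^ k"
          using pb[OF sz nsz] z by simp
        show "0 \<le> B / (v (cmod z) * cmod c) * x ^ k" using B0 x c0 weight_pos_disc[OF w z] by simp
        show "0 < 1 - t" using t by simp
        show "1 - t \<le> cmod (?D s)" using denom_ge[OF t s01] z by simp
      qed
      finally show "norm (p k (of_real s * z) / c ^ Suc k / ?D s) \<le> B / (v (cmod z) * cmod c) * x ^ k / (1 - t)" .
    qed
    have cont: "continuous_on {0..1} (\<lambda>s. \<Sum>k<n. p k (of_real s * z) / c ^ Suc k / ?D s)" for n
    proof (intro continuous_on_sum)
      fix k assume "k \<in> {..<n}"
      have "continuous_on {0..1} (\<lambda>s::real. (1 / c ^ Suc k) * p k (of_real s * z) / ?D s)"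
        by (rule cont_param[OF P(1) t z]) (intro continuous_intros)
      then show "continuous_on {0..1} (\<lambda>s. p k (of_real s * z) / c ^ Suc k / ?D s)"
        by (simp add: field_simps)
    qed
    obtain I J where I: "\<And>n. ((\<lambda>s. \<Sum>k<n. p k (of_real s * z) / c ^ Suc k / ?D s) has_integral I n) {0..1}"
      and J: "((\<lambda>s. \<Sum>k. p k (of_real s * z) / c ^ Suc k / ?D s) has_integral J) {0..1}"
      and IJ: "I \<longlonglongrightarrow> J"
      by (rule uniform_limit_integral[OF ul cont trivial_limit_sequentially]) blast
    have Ik: "((\<lambda>s. \<Sum>k<n. p k (of_real s * z) / c ^ Suc k / ?D s) has_integral (\<Sum>k<n. cesaro t (p k) z / c ^ Suc k)) {0..1}" for n
    proof (rule has_integral_sum)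
      fix k assume "k \<in> {..<n}"
      show "((\<lambda>s. p k (of_real s * z) / c ^ Suc k / ?D s) has_integral cesaro t (p k) z / c ^ Suc k) {0..1}"
        using has_integral_divide[OF cesaro_has_integral[OF P(1) z t], where c="c ^ Suc k"]
        by (simp add: divide_divide_eq_left mult.commute)
    qed simp
    have pS: "cesaro t (p k) = p (Suc k)" for k by (simp add: p_def)
    have In: "I n = (\<Sum>k<n. p (Suc k) z / c ^ Suc k)" for n
      using has_integral_unique[OF I[of n] Ik[of n]] unfolding pS .
    have Ju: "J = cesaro t u z"
    proof -
      have "((\<lambda>s. \<Sum>k. p k (of_real s * z) / c ^ Suc k / ?D s) has_integral cesaro t u z) {0..1}"
      proof (rule has_integral_cong[THEN iffD1, OF _ cesaro_has_integral[OF uhol z t]])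
        fix s :: real assume "s \<in> {0..1}"
        then have "of_real s * z \<in> disc" using sz_disc[OF z] by auto
        then show "u (of_real s * z) / ?D s = (\<Sum>k. p k (of_real s * z) / c ^ Suc k / ?D s)"
          unfolding u_def using suminf_divide[OF summ] by metis
      qed
      then show ?thesis using J has_integral_unique by blast
    qed
    have Ieq: "I = (\<lambda>n. \<Sum>k<n. p (Suc k) z / c ^ Suc k)" by (rule ext) (rule In)
    have Tsum: "(\<lambda>k. p (Suc k) z / c ^ Suc k) sums cesaro t u z"
      unfolding sums_def using IJ unfolding Ieq Ju .
    have sz: "summable (\<lambda>k. p k z / c ^ k)"
      using summable_mult[OF summ[OF z], of c] cnz by (simp add: field_simps)
    have cu: "c * u z = (\<Sum>k. p k z / c ^ k)"
      unfolding u_def using suminf_mult[OF summ[OF z], of c] cnz by (simp add: field_simps)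
    have "(\<Sum>k. p (Suc k) z / c ^ Suc k) = (\<Sum>k. p k z / c ^ k) - p 0 z / c ^ 0"
      by (rule suminf_split_head[OF sz])
    then show ?thesis using cu sums_unique[OF Tsum] by (simp add: p_def)
  qed
  show ?thesis using uhol ubound ueq q_def by blast
qed

lemma wb_add: "wb v f A \<Longrightarrow> wb v g B \<Longrightarrow> is_weight v \<Longrightarrow> wb v (\<lambda>z. f z + g z) (A + B)"
  using wb_lin[of v f A g B "\<lambda>z. f z + g z" 1 1] by simp

lemma wb_scale: "wb v f A \<Longrightarrow> is_weight v \<Longrightarrow> wb v (\<lambda>z. a * f z) (cmod a * A)"
  using wb_lin[of v f A f A "\<lambda>z. a * f z" a 0] by simp

lemma wb_sum:
  assumes w: "is_weight v" and A: "finite A" and f: "\<And>m. m \<in> A \<Longrightarrow> wb v (F m) (b m)"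
  shows "wb v (\<lambda>z. \<Sum>m\<in>A. F m z) (\<Sum>m\<in>A. b m)"
  using A f
proof (induction A rule: finite_induct)
  case empty
  then show ?case by (simp add: wb_def)
next
  case (insert a A)
  have "wb v (\<lambda>z. F a z + (\<Sum>m\<in>A. F m z)) (b a + (\<Sum>m\<in>A. b m))"
    using insert by (intro wb_add w) auto
  then show ?case using insert by simp
qed

lemma decomp:
  assumes w: "is_weight v" and t: "0 \<le> t" "t < 1"
  shows "\<exists>K\<ge>0. \<forall>g B. g holomorphic_on disc \<longrightarrow> wb v g B \<longrightarrow>
    (\<exists>\<beta> r. (\<forall>z\<in>disc. g z = (\<Sum>m<j. \<beta> m * eig t m z) + r z) \<and> r holomorphic_on disc \<and> zo j r
       \<and> wb v r (K * B) \<and> (\<forall>m<j. cmod (\<beta> m) \<le> K * B))"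
proof (induction j)
  case 0
  show ?case
  proof (intro exI[of _ 1] conjI allI impI)
    fix g B assume g: "g holomorphic_on disc" and B: "wb v g B"
    show "\<exists>\<beta> r. (\<forall>z\<in>disc. g z = (\<Sum>m<0. \<beta> m * eig t m z) + r z) \<and> r holomorphic_on disc \<and> zo 0 r
       \<and> wb v r (1 * B) \<and> (\<forall>m<0. cmod (\<beta> m) \<le> 1 * B)"
      using g B by (intro exI[of _ "\<lambda>_. 0"] exI[of _ g]) (auto simp: zo_def)
  qed simp
next
  case (Suc j)
  then obtain K where K0: "0 \<le> K" and K: "\<And>g B. g holomorphic_on disc \<Longrightarrow> wb v g B \<Longrightarrow>
    (\<exists>\<beta> r. (\<forall>z\<in>disc. g z = (\<Sum>m<j. \<beta> m * eig t m z) + r z) \<and> r holomorphic_on disc \<and> zo j r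
       \<and> wb v r (K * B) \<and> (\<forall>m<j. cmod (\<beta> m) \<le> K * B))" by blast
  define E where "E = v 0 / (1 - t) ^ Suc j"
  define C where "C = 1 / ((1/2) ^ j * v (1/2))"
  have v12: "0 < v (1/2)" using weight_pos[OF w] by simp
  have E0: "0 \<le> E" using weight_pos[OF w, of 0] t by (simp add: E_def)
  have C0: "0 \<le> C" using v12 by (simp add: C_def)
  show ?case
  proof (intro exI[of _ "K * (1 + C * E + C)"] conjI allI impI)
    show "0 \<le> K * (1 + C * E + C)" using K0 C0 E0 by simp
    fix g B assume g: "g holomorphic_on disc" and B: "wb v g B"
    have B0: "0 \<le> B" using wb_nonneg[OF w B] .
    obtain \<beta> r where gr: "\<forall>z\<in>disc. g z = (\<Sum>m<j. \<beta> m * eig t m z) + r z" and hr: "r holomorphic_on disc"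
      and zr: "zo j r" and rb: "wb v r (K * B)" and bb: "\<forall>m<j. cmod (\<beta> m) \<le> K * B"
      using K[OF g B] by blast
    obtain h where h: "h holomorphic_on disc" and rh: "\<forall>w\<in>disc. r w = w ^ j * h w"
      using zr unfolding zo_def by blast
    have h0: "cmod (h 0) \<le> K * B / ((1/2) ^ j * v (1/2))"
      by (rule h_bound[OF w h rh rb]) auto
    then have h0': "cmod (h 0) \<le> K * B * C" by (simp add: C_def)
    define r' where "r' z = r z - h 0 * eig t j z" for z
    define \<beta>' where "\<beta>' = \<beta>(j := h 0)"
    show "\<exists>\<beta> r. (\<forall>z\<in>disc. g z = (\<Sum>m<Suc j. \<beta> m * eig t m z) + r z) \<and> r holomorphic_on disc \<and> zo (Suc j) r
       \<and> wb v r (K * (1 + C * E + C) * B) \<and> (\<forall>m<Suc j. cmod (\<beta> m) \<le> K * (1 + C * E + C) * B)"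
    proof (intro exI[of _ \<beta>'] exI[of _ r'] conjI ballI allI impI)
      fix z assume z: "z \<in> disc"
      have "(\<Sum>m<Suc j. \<beta>' m * eig t m z) = (\<Sum>m<j. \<beta> m * eig t m z) + h 0 * eig t j z"
        by (simp add: \<beta>'_def)
      then show "g z = (\<Sum>m<Suc j. \<beta>' m * eig t m z) + r' z" using gr z by (simp add: r'_def)
    next
      show hr': "r' holomorphic_on disc" unfolding r'_def by (intro holomorphic_intros hr eig_holo t)
      define \<phi> where "\<phi> z = h z - h 0 * (1 / (1 - of_real t * z) ^ Suc j)" for z
      have h\<phi>: "\<phi> holomorphic_on disc" unfolding \<phi>_def
        by (intro holomorphic_intros h) (use denom_nz1[OF t] in auto)
      have \<phi>0: "\<phi> 0 = 0" by (simp add: \<phi>_def)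
      define \<psi> where "\<psi> z = (if z = 0 then deriv \<phi> 0 else (\<phi> z - \<phi> 0) / (z - 0))" for z
      have h\<psi>: "\<psi> holomorphic_on disc" unfolding \<psi>_def by (rule pole_lemma[OF h\<phi>]) simp
      show "zo (Suc j) r'"
        unfolding zo_def
      proof (intro exI[of _ \<psi>] conjI h\<psi> ballI)
        fix z assume z: "z \<in> disc"
        have "r' z = z ^ j * \<phi> z" using rh z by (simp add: r'_def \<phi>_def eig_def algebra_simps)
        also have "\<phi> z = z * \<psi> z" by (cases "z = 0") (auto simp: \<psi>_def \<phi>0)
        finally show "r' z = z ^ Suc j * \<psi> z" by simp
      qed
    next
      have "wb v r' (cmod 1 * (K * B) + cmod (- h 0) * E)"
        by (rule wb_lin[OF w rb eig_wb[OF w t, of j, folded E_def]]) (simp add: r'_def)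
      moreover have "cmod 1 * (K * B) + cmod (- h 0) * E \<le> K * (1 + C * E + C) * B"
      proof -
        have "cmod (h 0) * E \<le> K * B * C * E" using h0' E0 by (rule mult_right_mono)
        moreover have "0 \<le> K * B * C" using K0 B0 C0 by simp
        ultimately have "cmod 1 * (K * B) + cmod (- h 0) * E \<le> K * B + K * B * C * E + K * B * C" by simp
        also have "\<dots> = K * (1 + C * E + C) * B" by (simp add: algebra_simps)
        finally show ?thesis .
      qed
      ultimately show "wb v r' (K * (1 + C * E + C) * B)" by (rule wb_mono)
    next
      fix m assume m: "m < Suc j"
      show "cmod (\<beta>' m) \<le> K * (1 + C * E + C) * B"
      proof (cases "m = j")
        case True
        have "K * B * C \<le> K * (1 + C * E + C) * B"
          using K0 B0 C0 E0 by (simp add: algebra_simps mult_nonneg_nonneg)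
        then show ?thesis using True h0' by (simp add: \<beta>'_def)
      next
        case False
        then have "cmod (\<beta>' m) \<le> K * B" using bb m by (simp add: \<beta>'_def)
        also have "\<dots> \<le> K * (1 + C * E + C) * B"
          using K0 B0 C0 E0 by (simp add: algebra_simps mult_nonneg_nonneg)
        finally show ?thesis .
      qed
    qed
  qed
qed

lemma cesaro_scale:
  assumes t: "0 \<le> t" "t < 1" and f: "f holomorphic_on disc" and z: "z \<in> disc"
  shows "cesaro t (\<lambda>w. a * f w) z = a * cesaro t f z"
  using cesaro_lin[OF t f f z, of a 0] by simp

lemma cesaro_add:
  assumes t: "0 \<le> t" "t < 1" and f: "f holomorphic_on disc" and g: "g holomorphic_on disc" and z: "z \<in> disc"
  shows "cesaro t (\<lambda>w. f w + g w) z = cesaro t f z + cesaro t g z"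
  using cesaro_lin[OF t f g z, of 1 1] by simp

lemma nat_Suc_nz: "(1::complex) + of_nat m \<noteq> 0"
  by (metis add.commute of_nat_Suc of_nat_eq_0_iff nat.distinct(1))

lemma term_aux:
  fixes c g e n :: complex
  shows "c * (g * e) - g * (e / n) = g * (c - 1 / n) * e"
  by (simp add: divide_inverse algebra_simps)

lemma term_eq:
  fixes c \<beta> e :: complex
  assumes "c \<noteq> 1 / of_nat (Suc m)"
  shows "c * (\<beta> / (c - 1 / of_nat (Suc m)) * e) - \<beta> / (c - 1 / of_nat (Suc m)) * (e / of_nat (Suc m)) = \<beta> * e"
proof -
  let ?l = "1 / of_nat (Suc m) :: complex"
  have d: "c - ?l \<noteq> 0" using assms by simp
  have "c * (\<beta> / (c - ?l) * e) - \<beta> / (c - ?l) * (e / of_nat (Suc m)) = \<beta> / (c - ?l) * (c - ?l) * e"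
    by (rule term_aux)
  also have "\<dots> = \<beta> * e" using d by simp
  finally show ?thesis .
qed

lemma resolvent:
  assumes w: "is_weight v" and t: "0 \<le> t" "t < 1" and c0: "c \<noteq> 0"
    and cne: "\<And>m. c \<noteq> 1 / of_nat (Suc m)"
  shows "\<exists>L\<ge>0. \<forall>g B. g holomorphic_on disc \<longrightarrow> wb v g B \<longrightarrow>
    (\<exists>u. u holomorphic_on disc \<and> wb v u (L * B) \<and> (\<forall>z\<in>disc. c * u z - cesaro t u z = g z))"
proof -
  have cpos: "0 < cmod c" using c0 by simp
  obtain N where N: "1 / (cmod c * (1 - t)) < real N" using reals_Archimedean2 by blast
  define q where "q = 1 / (real (Suc N) * (1 - t))"
  have qc: "q < cmod c"
  proof -
    have "1 / (cmod c * (1 - t)) < real (Suc N)" using N by simp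
    then have "1 < real (Suc N) * (cmod c * (1 - t))" using cpos t by (simp add: field_simps)
    then have a: "1 < cmod c * (real (Suc N) * (1 - t))" by (simp add: mult_ac)
    have pos: "0 < real (Suc N) * (1 - t)" using t by simp
    show ?thesis unfolding q_def using a by (simp only: pos_divide_less_eq[OF pos])
  qed
  obtain K where K0: "0 \<le> K" and K: "\<And>g B. g holomorphic_on disc \<Longrightarrow> wb v g B \<Longrightarrow>
    (\<exists>\<beta> r. (\<forall>z\<in>disc. g z = (\<Sum>m<N. \<beta> m * eig t m z) + r z) \<and> r holomorphic_on disc \<and> zo N r
       \<and> wb v r (K * B) \<and> (\<forall>m<N. cmod (\<beta> m) \<le> K * B))"
    using decomp[OF w t, of N] by blast
  define E where "E m = v 0 / (1 - t) ^ Suc m" for m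
  define lam where "lam m = 1 / (of_nat (Suc m) :: complex)" for m
  have E0: "0 \<le> E m" for m using weight_pos[OF w, of 0] t by (simp add: E_def)
  have dl: "0 < cmod (c - lam m)" for m using cne[of m] by (simp add: lam_def)
  define L where "L = (\<Sum>m<N. K * E m / cmod (c - lam m)) + K / (cmod c - q)"
  have L0: "0 \<le> L" unfolding L_def using K0 E0 dl qc by (intro add_nonneg_nonneg sum_nonneg) auto
  show ?thesis
  proof (intro exI[of _ L] conjI allI impI L0)
    fix g B assume g: "g holomorphic_on disc" and B: "wb v g B"
    have B0: "0 \<le> B" using wb_nonneg[OF w B] .
    obtain \<beta> r where gr: "\<forall>z\<in>disc. g z = (\<Sum>m<N. \<beta> m * eig t m z) + r z" and hr: "r holomorphic_on disc"
      and zr: "zo N r" and rb: "wb v r (K * B)" and bb: "\<forall>m<N. cmod (\<beta> m) \<le> K * B"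
      using K[OF g B] by blast
    obtain u0 where hu0: "u0 holomorphic_on disc" and bu0: "wb v u0 (K * B / (cmod c - q))"
      and eu0: "\<forall>z\<in>disc. c * u0 z - cesaro t u0 z = r z"
      using neumann[OF w t hr zr rb qc[unfolded q_def]] unfolding q_def by blast
    define \<gamma> where "\<gamma> m = \<beta> m / (c - lam m)" for m
    define u where "u z = (\<Sum>m<N. \<gamma> m * eig t m z) + u0 z" for z
    have hs: "(\<lambda>z. \<Sum>m<N. \<gamma> m * eig t m z) holomorphic_on disc"
      by (intro holomorphic_intros eig_holo t)
    have hu: "u holomorphic_on disc" unfolding u_def by (intro holomorphic_intros eig_holo t hu0)
    have "wb v u ((\<Sum>m<N. cmod (\<gamma> m) * E m) + K * B / (cmod c - q))"
      unfolding u_def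
    proof (rule wb_add[OF wb_sum[OF w] bu0 w])
      fix m show "wb v (\<lambda>z. \<gamma> m * eig t m z) (cmod (\<gamma> m) * E m)"
        unfolding E_def by (rule wb_scale[OF eig_wb[OF w t] w])
    qed simp
    moreover have "(\<Sum>m<N. cmod (\<gamma> m) * E m) + K * B / (cmod c - q) \<le> L * B"
    proof -
      have "(\<Sum>m<N. cmod (\<gamma> m) * E m) \<le> (\<Sum>m<N. K * E m / cmod (c - lam m) * B)"
      proof (rule sum_mono)
        fix m assume m: "m \<in> {..<N}"
        have "cmod (\<gamma> m) = cmod (\<beta> m) / cmod (c - lam m)" by (simp add: \<gamma>_def norm_divide)
        also have "\<dots> \<le> K * B / cmod (c - lam m)" using bb m dl[of m] by (intro divide_right_mono) auto
        finally have "cmod (\<gamma> m) * E m \<le> K * B / cmod (c - lam m) * E m"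
          using E0[of m] by (rule mult_right_mono)
        then show "cmod (\<gamma> m) * E m \<le> K * E m / cmod (c - lam m) * B" by (simp add: field_simps)
      qed
      also have "\<dots> = (\<Sum>m<N. K * E m / cmod (c - lam m)) * B" by (simp add: sum_distrib_right)
      finally show ?thesis unfolding L_def by (simp add: algebra_simps)
    qed
    ultimately have bu: "wb v u (L * B)" by (rule wb_mono)
    have eq: "c * u z - cesaro t u z = g z" if z: "z \<in> disc" for z
    proof -
      have Tu: "cesaro t u z = (\<Sum>m<N. \<gamma> m * (eig t m z / of_nat (Suc m))) + cesaro t u0 z"
      proof -
        have "cesaro t u z = cesaro t (\<lambda>z. \<Sum>m<N. \<gamma> m * eig t m z) z + cesaro t u0 z"
          unfolding u_def by (rule cesaro_add[OF t hs hu0 z])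
        also have "cesaro t (\<lambda>z. \<Sum>m<N. \<gamma> m * eig t m z) z = (\<Sum>m<N. cesaro t (\<lambda>z. \<gamma> m * eig t m z) z)"
          by (rule cesaro_sum[OF t _ z]) (auto intro!: holomorphic_intros eig_holo t)
        also have "\<dots> = (\<Sum>m<N. \<gamma> m * (eig t m z / of_nat (Suc m)))"
          by (rule sum.cong) (simp_all add: cesaro_scale[OF t eig_holo[OF t] z] eig_cesaro[OF t z])
        finally show ?thesis .
      qed
      have "c * u z - cesaro t u z = (\<Sum>m<N. c * (\<gamma> m * eig t m z) - \<gamma> m * (eig t m z / of_nat (Suc m))) + (c * u0 z - cesaro t u0 z)"
        unfolding Tu u_def by (simp add: algebra_simps sum_distrib_left sum_subtractf)
      also have "(\<Sum>m<N. c * (\<gamma> m * eig t m z) - \<gamma> m * (eig t m z / of_nat (Suc m))) = (\<Sum>m<N. \<beta> m * eig t m z)"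
        by (rule sum.cong[OF refl]) (unfold \<gamma>_def lam_def, rule term_eq[OF cne])
      finally show ?thesis using eu0 gr z by simp
    qed
    show "\<exists>u. u holomorphic_on disc \<and> wb v u (L * B) \<and> (\<forall>z\<in>disc. c * u z - cesaro t u z = g z)"
      using hu bu eq by blast
  qed
qed

lemma eig_eq:
  assumes t: "0 \<le> t" "t < 1" and z: "z \<in> disc"
  shows "c * eig t m z - cesaro t (eig t m) z = (c - 1 / of_nat (Suc m)) * eig t m z"
  using eig_cesaro[OF t z, of m] by (simp add: algebra_simps)

lemma not_inv:
  assumes w: "is_weight v" and t: "0 \<le> t" "t < 1"
    and XH: "\<And>f. f \<in> X \<Longrightarrow> f holomorphic_on disc \<and> (\<exists>B. wb v f B)"
    and Xe: "\<And>m. eig t m \<in> X"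
    and X3: "\<And>f. f \<in> X \<Longrightarrow> (\<lambda>w. c * f w - cesaro t f w) \<in> X"
    and S1: "\<forall>f\<in>X. \<forall>z\<in>disc. S (\<lambda>w. c * f w - cesaro t f w) z = f z"
    and S4: "\<forall>g\<in>X. wnorm v (S g) \<le> C * wnorm v g"
  shows "1 \<le> C * cmod (c - 1 / of_nat (Suc m))"
proof -
  let ?e = "eig t m" and ?l = "c - 1 / of_nat (Suc m)"
  let ?g = "\<lambda>w. c * ?e w - cesaro t ?e w"
  have gX: "?g \<in> X" using X3[OF Xe] .
  obtain Bg where Bg: "wb v ?g Bg" using XH[OF gX] by blast
  have eb: "wb v ?e (v 0 / (1 - t) ^ Suc m)" by (rule eig_wb[OF w t])
  have epos: "0 < wnorm v ?e"
    by (rule wnorm_pos[OF w eb, of "1/2"]) (use eig_nz[OF t] in auto)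
  have "wnorm v (S ?g) = wnorm v ?e" by (rule wnorm_cong) (use S1 Xe in auto)
  moreover have "wnorm v (S ?g) \<le> C * wnorm v ?g" using S4 gX by blast
  moreover have gle: "wnorm v ?g \<le> cmod ?l * wnorm v ?e"
  proof (rule wnorm_le)
    have "wb v ?g (cmod ?l * wnorm v ?e + cmod 0 * wnorm v ?e)"
      by (rule wb_lin[OF w wb_wnorm[OF eb] wb_wnorm[OF eb]]) (use eig_eq[OF t] in simp)
    then show "wb v ?g (cmod ?l * wnorm v ?e)" by simp
  qed
  moreover have g0: "0 \<le> wnorm v ?g" by (rule wnorm_nonneg[OF w Bg])
  ultimately have a: "wnorm v ?e \<le> C * wnorm v ?g" by simp
  show ?thesis
  proof (cases "0 \<le> C")
    case True
    have "wnorm v ?e \<le> C * (cmod ?l * wnorm v ?e)" using a mult_left_mono[OF gle True] by linarith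
    then have "1 * wnorm v ?e \<le> (C * cmod ?l) * wnorm v ?e" by (simp add: mult_ac)
    then show ?thesis using epos by (simp only: mult_le_cancel_right)
  next
    case False
    then have "C * wnorm v ?g \<le> 0" using g0 by (simp add: mult_nonpos_nonneg)
    then show ?thesis using a epos by linarith
  qed
qed

lemma spec_char:
  assumes w: "is_weight v" and t: "0 \<le> t" "t < 1"
    and XH: "\<And>f. f \<in> X \<Longrightarrow> f holomorphic_on disc \<and> (\<exists>B. wb v f B)"
    and Xe: "\<And>m. eig t m \<in> X"
    and X3: "\<And>c f. f \<in> X \<Longrightarrow> (\<lambda>w. c * f w - cesaro t f w) \<in> X"
    and X4: "\<And>c u g. c \<noteq> 0 \<Longrightarrow> g \<in> X \<Longrightarrow> u holomorphic_on disc \<Longrightarrow> (\<exists>B. wb v u B) \<Longrightarrow>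
               (\<forall>z\<in>disc. c * u z - cesaro t u z = g z) \<Longrightarrow> u \<in> X"
  shows "pspec (cesaro t) X = {1 / of_nat (m + 1) | m. True}
     \<and> spec (cesaro t) X (wnorm v) = {1 / of_nat (m + 1) | m. True} \<union> {0}"
proof
  have half: "(1/2::complex) \<in> disc" by simp
  show P: "pspec (cesaro t) X = {1 / of_nat (m + 1) | m. True}"
  proof (rule set_eqI, rule iffI)
    fix c :: complex assume "c \<in> pspec (cesaro t) X"
    then obtain f z0 where f: "f \<in> X" and z0: "z0 \<in> disc" "f z0 \<noteq> 0"
      and eq: "\<forall>z\<in>disc. c * f z - cesaro t f z = 0" unfolding pspec_def by blast
    have hf: "f holomorphic_on disc" using XH[OF f] by blast
    obtain m where "c = 1 / of_nat (Suc m)"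
      using eigen_char[OF t hf z0] eq by blast
    then show "c \<in> {1 / of_nat (m + 1) | m. True}" by auto
  next
    fix c :: complex assume "c \<in> {1 / of_nat (m + 1) | m. True}"
    then obtain m where c: "c = 1 / of_nat (Suc m)" by auto
    show "c \<in> pspec (cesaro t) X"
      unfolding pspec_def
    proof (intro CollectI bexI[of _ "eig t m"] conjI ballI Xe)
      show "\<exists>z\<in>disc. eig t m z \<noteq> 0" using half eig_nz[OF t] by blast
      fix z assume "z \<in> disc"
      then show "c * eig t m z - cesaro t (eig t m) z = 0" using eig_eq[OF t, of z c m] c by simp
    qed
  qed
  show "spec (cesaro t) X (wnorm v) = {1 / of_nat (m + 1) | m. True} \<union> {0}"
  proof (rule set_eqI, rule iffI)
    fix c :: complex assume cs: "c \<in> spec (cesaro t) X (wnorm v)"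
    show "c \<in> {1 / of_nat (m + 1) | m. True} \<union> {0}"
    proof (rule ccontr)
      assume "c \<notin> {1 / of_nat (m + 1) | m. True} \<union> {0}"
      then have c0: "c \<noteq> 0" and cne: "\<And>m. c \<noteq> 1 / of_nat (Suc m)" by auto
      obtain L where L0: "0 \<le> L" and L: "\<And>g B. g holomorphic_on disc \<Longrightarrow> wb v g B \<Longrightarrow>
        (\<exists>u. u holomorphic_on disc \<and> wb v u (L * B) \<and> (\<forall>z\<in>disc. c * u z - cesaro t u z = g z))"
        using resolvent[OF w t c0 cne] by blast
      define Q where "Q g u \<longleftrightarrow> u holomorphic_on disc \<and> wb v u (L * wnorm v g) \<and> (\<forall>z\<in>disc. c * u z - cesaro t u z = g z)" for g u
      define Sop where "Sop g = (SOME u. Q g u)" for g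
      have SQ: "Q g (Sop g)" if g: "g \<in> X" for g
      proof -
        obtain B where "wb v g B" using XH[OF g] by blast
        then have "wb v g (wnorm v g)" by (rule wb_wnorm)
        then have "\<exists>u. Q g u" unfolding Q_def using L XH[OF g] by blast
        then show ?thesis unfolding Sop_def by (rule someI_ex)
      qed
      have SX: "Sop g \<in> X" if g: "g \<in> X" for g
        using SQ[OF g] X4[OF c0 g] unfolding Q_def by blast
      have S3: "\<forall>g\<in>X. \<forall>z\<in>disc. c * Sop g z - cesaro t (Sop g) z = g z"
        using SQ unfolding Q_def by blast
      have S4: "\<forall>g\<in>X. wnorm v (Sop g) \<le> L * wnorm v g"
        using SQ wnorm_le unfolding Q_def by blast
      have S1: "\<forall>f\<in>X. \<forall>z\<in>disc. Sop (\<lambda>w. c * f w - cesaro t f w) z = f z"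
      proof (intro ballI)
        fix f z assume f: "f \<in> X" and z: "z \<in> disc"
        let ?g = "\<lambda>w. c * f w - cesaro t f w"
        let ?u = "Sop ?g"
        have gX: "?g \<in> X" by (rule X3[OF f])
        have hu: "?u holomorphic_on disc" and eu: "\<forall>z\<in>disc. c * ?u z - cesaro t ?u z = ?g z"
          using SQ[OF gX] unfolding Q_def by auto
        have hf: "f holomorphic_on disc" using XH[OF f] by blast
        let ?d = "\<lambda>w. 1 * ?u w + (-1) * f w"
        have hd: "?d holomorphic_on disc" by (intro holomorphic_intros hu hf)
        have ed: "c * ?d y - cesaro t ?d y = 0" if y: "y \<in> disc" for y
        proof -
          have e2: "cesaro t ?d y = 1 * cesaro t ?u y + (-1) * cesaro t f y" by (rule cesaro_lin[OF t hu hf y])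
          have e1: "c * ?u y - cesaro t ?u y = c * f y - cesaro t f y" using eu y by blast
          have "c * ?d y - cesaro t ?d y = (c * ?u y - cesaro t ?u y) - (c * f y - cesaro t f y)"
            unfolding e2 by (simp add: algebra_simps)
          then show ?thesis unfolding e1 by simp
        qed
        show "?u z = f z"
        proof (rule ccontr)
          assume "?u z \<noteq> f z"
          then have dz: "?d z \<noteq> 0" by simp
          obtain m where "c = 1 / of_nat (Suc m)" using eigen_char[OF t hd z dz ed] by blast
          then show False using cne by blast
        qed
      qed
      have "\<exists>S. (\<forall>g\<in>X. S g \<in> X) \<and> (\<forall>f\<in>X. \<forall>z\<in>disc. S (\<lambda>w. c * f w - cesaro t f w) z = f z)
          \<and> (\<forall>g\<in>X. \<forall>z\<in>disc. c * S g z - cesaro t (S g) z = g z) \<and> (\<exists>C. \<forall>g\<in>X. wnorm v (S g) \<le> C * wnorm v g)"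
        using SX S1 S3 S4 by blast
      then show False using cs unfolding spec_def by blast
    qed
  next
    fix c :: complex assume c: "c \<in> {1 / of_nat (m + 1) | m. True} \<union> {0}"
    show "c \<in> spec (cesaro t) X (wnorm v)"
      unfolding spec_def
    proof (intro CollectI notI)
      assume "\<exists>S. (\<forall>g\<in>X. S g \<in> X) \<and> (\<forall>f\<in>X. \<forall>z\<in>disc. S (\<lambda>w. c * f w - cesaro t f w) z = f z)
          \<and> (\<forall>g\<in>X. \<forall>z\<in>disc. c * S g z - cesaro t (S g) z = g z) \<and> (\<exists>C. \<forall>g\<in>X. wnorm v (S g) \<le> C * wnorm v g)"
      then obtain S C where S1: "\<forall>f\<in>X. \<forall>z\<in>disc. S (\<lambda>w. c * f w - cesaro t f w) z = f z"
        and S4: "\<forall>g\<in>X. wnorm v (S g) \<le> C * wnorm v g" by blast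
      have key: "1 \<le> C * cmod (c - 1 / of_nat (Suc m))" for m
        by (rule not_inv[OF w t XH Xe X3 S1 S4]) auto
      show False
      proof (cases "c = 0")
        case True
        obtain n where n: "C < real n" using reals_Archimedean2 by blast
        have "1 \<le> C * cmod (c - 1 / of_nat (Suc n))" by (rule key)
        also have "\<dots> = C / real (Suc n)" using True by (simp add: norm_divide norm_of_nat del: of_nat_Suc)
        also have "\<dots> < 1" using n by (simp add: field_simps)
        finally show False by simp
      next
        case False
        then obtain m where "c = 1 / of_nat (Suc m)" using c by auto
        then show False using key[of m] by simp
      qed
    qed
  qed
qed

lemma cesaro_wb0:
  assumes w: "is_weight v" and t: "0 \<le> t" "t < 1" and f: "f holomorphic_on disc" and B: "wb v f B"
  shows "wb v (cesaro t f) (B / (real (Suc 0) * (1 - t)))"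
  by (rule cesaro_bound[OF w t f f _ B]) simp

theorem proposition2p8:
  fixes v :: "real \<Rightarrow> real" and t :: real
  assumes "is_weight v"
    and "(v \<longlongrightarrow> 0) (at_left 1)"
    and "0 \<le> t" and "t < 1"
  shows "pspec (cesaro t) (Hinf v) = {1 / of_nat (m + 1) | m. True}
     \<and> pspec (cesaro t) (H0 v) = {1 / of_nat (m + 1) | m. True}
     \<and> spec (cesaro t) (Hinf v) (wnorm v) = {1 / of_nat (m + 1) | m. True} \<union> {0}
     \<and> spec (cesaro t) (H0 v) (wnorm v) = {1 / of_nat (m + 1) | m. True} \<union> {0}"
proof -
  note w = assms(1) and v0 = assms(2) and t = assms(3,4)
  have A: "pspec (cesaro t) (Hinf v) = {1 / of_nat (m + 1) | m. True}
     \<and> spec (cesaro t) (Hinf v) (wnorm v) = {1 / of_nat (m + 1) | m. True} \<union> {0}"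
  proof (rule spec_char[OF w t])
    show "f holomorphic_on disc \<and> (\<exists>B. wb v f B)" if "f \<in> Hinf v" for f
      using that Hinf_iff by blast
    show "eig t m \<in> Hinf v" for m by (rule eig_Hinf[OF w t])
    show "(\<lambda>w. c * f w - cesaro t f w) \<in> Hinf v" if f: "f \<in> Hinf v" for c f
    proof -
      obtain B where hf: "f holomorphic_on disc" and B: "wb v f B" using f Hinf_iff by blast
      have "wb v (\<lambda>w. c * f w - cesaro t f w) (cmod c * B + cmod (-1) * (B / (real (Suc 0) * (1 - t))))"
        by (rule wb_lin[OF w B cesaro_wb0[OF w t hf B]]) simp
      moreover have "(\<lambda>w. c * f w - cesaro t f w) holomorphic_on disc"
        by (intro holomorphic_intros hf cesaro_holo[OF hf t])
      ultimately show ?thesis using Hinf_iff by blast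
    qed
    show "u \<in> Hinf v" if "u holomorphic_on disc" "\<exists>B. wb v u B" for u
      using that Hinf_iff by blast
  qed
  have B: "pspec (cesaro t) (H0 v) = {1 / of_nat (m + 1) | m. True}
     \<and> spec (cesaro t) (H0 v) (wnorm v) = {1 / of_nat (m + 1) | m. True} \<union> {0}"
  proof (rule spec_char[OF w t])
    show "f holomorphic_on disc \<and> (\<exists>B. wb v f B)" if "f \<in> H0 v" for f
      using that H0_holo H0_wb[OF w] by blast
    show "eig t m \<in> H0 v" for m
    proof -
      have T: "cesaro t (eig t m) \<in> H0 v"
        by (rule cesaro_H0[OF w v0 t eig_holo[OF t] eig_wb[OF w t]])
      show ?thesis
      proof (rule H0_lin[OF w T T eig_holo[OF t]])
        fix z assume z: "z \<in> disc"
        show "eig t m z = of_nat (Suc m) * cesaro t (eig t m) z + 0 * cesaro t (eig t m) z"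
          using eig_cesaro[OF t z, of m] by (simp del: of_nat_Suc)
      qed
    qed
    show "(\<lambda>w. c * f w - cesaro t f w) \<in> H0 v" if f: "f \<in> H0 v" for c f
    proof -
      have hf: "f holomorphic_on disc" using f H0_holo by blast
      obtain B where B: "wb v f B" using H0_wb[OF w f] by blast
      have T: "cesaro t f \<in> H0 v" by (rule cesaro_H0[OF w v0 t hf B])
      show ?thesis
        by (rule H0_lin[OF w f T, of _ c "-1"]) (auto intro!: holomorphic_intros hf cesaro_holo[OF hf t])
    qed
    show "u \<in> H0 v" if c: "c \<noteq> 0" and g: "g \<in> H0 v" and hu: "u holomorphic_on disc"
      and Bu: "\<exists>B. wb v u B" and eq: "\<forall>z\<in>disc. c * u z - cesaro t u z = g z" for c u g
    proof -
      obtain B where B: "wb v u B" using Bu by blast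
      have T: "cesaro t u \<in> H0 v" by (rule cesaro_H0[OF w v0 t hu B])
      show ?thesis
      proof (rule H0_lin[OF w g T hu])
        fix z assume z: "z \<in> disc"
        have "c * u z = g z + cesaro t u z" using eq z by (simp add: algebra_simps)
        then show "u z = (1 / c) * g z + (1 / c) * cesaro t u z" using c by (simp add: field_simps)
      qed
    qed
  qed
  show ?thesis using A B by blast
qed


end
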